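(* Let $n\ge 2$. For every persistent graph $G=([n],E)$, the set $\Xi(G)$ is a triangulation of the cyclic polytope $C(n+2,3)$.
   Context: The cyclic polytope $C(n+2,3)$ is the convex hull of $n+2$ points on the moment curve $t\mapsto(t,t^2,t^3)$, with vertices labelled $0,\dots,n+1$ in increasing order of the parameter; simplices are identified with their vertex sets. A triangulation is a set of 3-simplices (4-element vertex subsets) whose convex hulls cover the polytope and pairwise intersect in a common (possibly empty) face. A graph $G=([n],E)$ is persistent if (1) $\{i,i+1\}\in E$ for all $1\le i<n$; (2) (X-property) if $\{a,c\},\{b,d\}\in E$ for $a<b<c<d$ then $\{a,d\}\in E$; (3) (bar-property) for every edge $\{a,b\}\in E$ with $a<b-1$ there is $x$ with $a<x<b$ and $\{a,x\},\{x,b\}\in E$. $\hat G$ is the graph on $\{0,\dots,n+1\}$ with edge set $E$ together with all pairs containing $0$ or $n+1$. For $e=\{v,w\}\in E$ with $v<w$, $\ell_G(e)=\max\{i : i<v,\ \{i,w\}\in E(\hat G)\}$, $r_G(e)=\min\{i : w<i,\ \{i,v\}\in E(\hat G)\}$, $\xi_G(e)=\{\ell_G(e),v,w,r_G(e)\}$, and $\Xi(G)=\{\xi_G(e): e\in E\}$. *)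

theory Defs
  imports "HOL-Analysis.Analysis"
begin

definition moment :: "real \<Rightarrow> real^3" where
  "moment x = vector [x, x^2, x^3]"

definition cyc_hull :: "(nat \<Rightarrow> real) \<Rightarrow> nat set \<Rightarrow> (real^3) set" where
  "cyc_hull t S = convex hull ((\<lambda>i. moment (t i)) ` S)"

definition cyc_triangulation :: "(nat \<Rightarrow> real) \<Rightarrow> nat \<Rightarrow> nat set set \<Rightarrow> bool" where
  "cyc_triangulation t m T \<longleftrightarrow>
     (\<forall>\<sigma>\<in>T. \<sigma> \<subseteq> {0..<m} \<and> card \<sigma> = 4) \<and>
     \<Union>((\<lambda>\<sigma>. cyc_hull t \<sigma>) ` T) = cyc_hull t {0..<m} \<and>
     (\<forall>\<sigma>\<in>T. \<forall>\<tau>\<in>T.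
        (cyc_hull t \<sigma> \<inter> cyc_hull t \<tau>) face_of cyc_hull t \<sigma> \<and>
        (cyc_hull t \<sigma> \<inter> cyc_hull t \<tau>) face_of cyc_hull t \<tau>)"

definition persistent :: "nat \<Rightarrow> nat set set \<Rightarrow> bool" where
  "persistent n E \<longleftrightarrow>
     (\<forall>e\<in>E. \<exists>a b. e = {a, b} \<and> a < b \<and> 1 \<le> a \<and> b \<le> n) \<and>
     (\<forall>i. 1 \<le> i \<and> i < n \<longrightarrow> {i, i + 1} \<in> E) \<and>
     (\<forall>a b c d. a < b \<and> b < c \<and> c < d \<and> {a, c} \<in> E \<and> {b, d} \<in> E \<longrightarrow> {a, d} \<in> E) \<and>
     (\<forall>a b. {a, b} \<in> E \<and> a + 1 < b \<longrightarrow>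
        (\<exists>x. a < x \<and> x < b \<and> {a, x} \<in> E \<and> {x, b} \<in> E))"

definition hatE :: "nat \<Rightarrow> nat set set \<Rightarrow> nat set set" where
  "hatE n E = E \<union> {{a, b} | a b. a \<noteq> b \<and> a \<le> n + 1 \<and> b \<le> n + 1 \<and> (a = 0 \<or> a = n + 1)}"

definition ellG :: "nat \<Rightarrow> nat set set \<Rightarrow> nat set \<Rightarrow> nat" where
  "ellG n E e = Max {i. i < Min e \<and> {i, Max e} \<in> hatE n E}"

definition rG :: "nat \<Rightarrow> nat set set \<Rightarrow> nat set \<Rightarrow> nat" where
  "rG n E e = Min {i. Max e < i \<and> {i, Min e} \<in> hatE n E}"

definition xiG :: "nat \<Rightarrow> nat set set \<Rightarrow> nat set \<Rightarrow> nat set" where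
  "xiG n E e = {ellG n E e, Min e, Max e, rG n E e}"

definition XiG :: "nat \<Rightarrow> nat set set \<Rightarrow> nat set set" where
  "XiG n E = xiG n E ` E"

end

theory Submission
  imports Defs
begin

definition Hh :: "nat \<Rightarrow> nat set set \<Rightarrow> nat \<Rightarrow> nat \<Rightarrow> bool" where
  "Hh n E x y \<longleftrightarrow> {x, y} \<in> hatE n E"

lemma Hh_iff:
  "Hh n E x y \<longleftrightarrow> {x,y} \<in> E \<or> (x \<noteq> y \<and> x \<le> n+1 \<and> y \<le> n+1 \<and> (x = 0 \<or> x = n+1 \<or> y = 0 \<or> y = n+1))"
  unfolding Hh_def hatE_def by (auto simp: doubleton_eq_iff)


lemma Hh_sym: "Hh n E x y = Hh n E y x"
  unfolding Hh_def by (simp add: insert_commute)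

lemma pers_parts:
  assumes "persistent n E"
  shows "\<forall>e\<in>E. \<exists>a b. e = {a, b} \<and> a < b \<and> 1 \<le> a \<and> b \<le> n"
    and "\<forall>i. 1 \<le> i \<and> i < n \<longrightarrow> {i, i + 1} \<in> E"
    and "\<forall>a b c d. a < b \<and> b < c \<and> c < d \<and> {a, c} \<in> E \<and> {b, d} \<in> E \<longrightarrow> {a, d} \<in> E"
    and "\<forall>a b. {a, b} \<in> E \<and> a + 1 < b \<longrightarrow> (\<exists>x. a < x \<and> x < b \<and> {a, x} \<in> E \<and> {x, b} \<in> E)"
  using assms unfolding persistent_def by (rule conjunct1 conjunct2[THEN conjunct1] conjunct2[THEN conjunct2, THEN conjunct1] conjunct2[THEN conjunct2, THEN conjunct2])+

lemma p_edge:
  assumes "persistent n E" "{x,y} \<in> E"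
  shows "x \<noteq> y \<and> 1 \<le> x \<and> x \<le> n \<and> 1 \<le> y \<and> y \<le> n"
proof -
  from pers_parts(1)[OF assms(1)] assms(2) obtain a b where ab: "{x,y} = {a,b}" "a < b" "1 \<le> a" "b \<le> n"
    by blast
  then have "(x = a \<and> y = b) \<or> (x = b \<and> y = a)" by (simp add: doubleton_eq_iff)
  then show ?thesis using ab by auto
qed

lemma p_path: "persistent n E \<Longrightarrow> 1 \<le> i \<Longrightarrow> i < n \<Longrightarrow> {i, i+1} \<in> E"
  using pers_parts(2) by blast

lemma p_X: "persistent n E \<Longrightarrow> a < b \<Longrightarrow> b < c \<Longrightarrow> c < d \<Longrightarrow> {a,c} \<in> E \<Longrightarrow> {b,d} \<in> E \<Longrightarrow> {a,d} \<in> E"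
  using pers_parts(3) by blast

lemma p_bar: "persistent n E \<Longrightarrow> {a,b} \<in> E \<Longrightarrow> a + 1 < b \<Longrightarrow> \<exists>x. a < x \<and> x < b \<and> {a,x} \<in> E \<and> {x,b} \<in> E"
  using pers_parts(4) by blast


lemma p_finite: "persistent n E \<Longrightarrow> finite E"
proof -
  assume p: "persistent n E"
  have "E \<subseteq> Pow {1..n}"
  proof
    fix e assume "e \<in> E"
    with pers_parts(1)[OF p] obtain a b where "e = {a,b}" "a < b" "1 \<le> a" "b \<le> n" by blast
    then show "e \<in> Pow {1..n}" by auto
  qed
  then show ?thesis by (rule finite_subset) simp
qed

context
  fixes n :: nat and E :: "nat set set"
  assumes P: "persistent n E"
begin

lemma Hh_bound: "Hh n E x y \<Longrightarrow> x \<noteq> y \<and> x \<le> n+1 \<and> y \<le> n+1"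
proof -
  assume h: "Hh n E x y"
  show ?thesis
  proof (cases "{x,y} \<in> E")
    case True then show ?thesis using p_edge[OF P True] by simp
  next
    case False then show ?thesis using h unfolding Hh_iff by simp
  qed
qed

lemma Hh_inner: "Hh n E x y \<Longrightarrow> 1 \<le> x \<Longrightarrow> x \<le> n \<Longrightarrow> 1 \<le> y \<Longrightarrow> y \<le> n \<Longrightarrow> {x,y} \<in> E"
  unfolding Hh_iff by linarith

lemma Hh_E: "{x,y} \<in> E \<Longrightarrow> Hh n E x y"
  unfolding Hh_iff by simp

lemma Hh_0: "0 < y \<Longrightarrow> y \<le> n+1 \<Longrightarrow> Hh n E 0 y"
  unfolding Hh_iff by simp

lemma Hh_top: "x \<le> n \<Longrightarrow> Hh n E x (n+1)"
  unfolding Hh_iff by simp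

lemma Hh_X:
  assumes "a < b" "b < c" "c < d" "Hh n E a c" "Hh n E b d"
  shows "Hh n E a d"
proof -
  have bd: "d \<le> n+1" using Hh_bound[OF assms(5)] by simp
  show ?thesis
  proof (cases "a = 0 \<or> d = n+1")
    case True
    then show ?thesis
    proof
      assume "a = 0" then show ?thesis using Hh_0[of d] assms bd by simp
    next
      assume "d = n+1" then show ?thesis using Hh_top[of a] assms by simp
    qed
  next
    case False
    then have a1: "1 \<le> a" and dn: "d \<le> n" using bd by auto
    have "{a,c} \<in> E" using Hh_inner[OF assms(4)] a1 assms dn by simp
    moreover have "{b,d} \<in> E" using Hh_inner[OF assms(5)] a1 assms dn by simp
    ultimately have "{a,d} \<in> E" using p_X[OF P] assms by blast
    then show ?thesis by (rule Hh_E)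
  qed
qed

lemma Hh_bar:
  assumes "Hh n E a b" "a + 1 < b"
  shows "\<exists>x. a < x \<and> x < b \<and> Hh n E a x \<and> Hh n E x b"
proof -
  have bb: "b \<le> n+1" using Hh_bound[OF assms(1)] by simp
  show ?thesis
  proof (cases "a = 0")
    case True
    have "Hh n E (b-1) b"
    proof (cases "b = n+1")
      case True then show ?thesis using Hh_top[of "b-1"] by simp
    next
      case False
      then have "{b-1, b-1+1} \<in> E" using p_path[OF P, of "b-1"] assms bb True by auto
      then show ?thesis using assms True Hh_E by auto
    qed
    moreover have "Hh n E a (b-1)" using True assms bb Hh_0[of "b-1"] by simp
    ultimately show ?thesis using assms True by (intro exI[of _ "b-1"]) auto
  next
    case a0: False
    show ?thesis
    proof (cases "b = n+1")
      case True
      have "{a, a+1} \<in> E" using p_path[OF P, of a] a0 assms True by auto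
      then have "Hh n E a (a+1)" by (rule Hh_E)
      moreover have "Hh n E (a+1) b" using True assms Hh_top[of "a+1"] by simp
      ultimately show ?thesis using assms by (intro exI[of _ "a+1"]) auto
    next
      case False
      then have "{a,b} \<in> E" using Hh_inner[OF assms(1)] a0 bb assms by auto
      then obtain x where "a < x" "x < b" "{a,x} \<in> E" "{x,b} \<in> E" using p_bar[OF P] assms by blast
      then show ?thesis using Hh_E by blast
    qed
  qed
qed

end


definition inX :: "nat \<Rightarrow> nat set set \<Rightarrow> nat \<Rightarrow> nat \<Rightarrow> nat \<Rightarrow> nat \<Rightarrow> bool" where
  "inX n E a b c d \<longleftrightarrow> a < b \<and> b < c \<and> c < d \<and> {b,c} \<in> E \<and> Hh n E a b \<and> Hh n E a c \<and>
     Hh n E a d \<and> Hh n E b d \<and> Hh n E c d \<and> (\<forall>x. a < x \<and> x < b \<longrightarrow> \<not> Hh n E x c) \<and>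
     (\<forall>x. c < x \<and> x < d \<longrightarrow> \<not> Hh n E x b)"

context
  fixes n :: nat and E :: "nat set set"
  assumes P: "persistent n E"
begin

lemma lemC:
  assumes "Hh n E v w" "l < v" "v < w" "\<forall>x. l < x \<and> x < v \<longrightarrow> \<not> Hh n E x w"
  shows "v < y \<Longrightarrow> y \<le> w \<Longrightarrow> Hh n E l y \<Longrightarrow> Hh n E l v"
proof (induction y rule: less_induct)
  case (less y)
  have "l + 1 < y" using less.prems assms by linarith
  then obtain x where x: "l < x" "x < y" "Hh n E l x" "Hh n E x y" using Hh_bar[OF P less.prems(3)] by blast
  consider "x < v" | "x = v" | "x > v" by linarith
  then show ?case
  proof cases
    case 1
    have "Hh n E x w"
    proof (cases "y = w")
      case True then show ?thesis using x by simp
    next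
      case False
      then have "y < w" using less.prems by simp
      then show ?thesis using Hh_X[OF P 1 less.prems(1) _ x(4) assms(1)] by simp
    qed
    then show ?thesis using assms(4) x 1 by blast
  next
    case 2 then show ?thesis using x by simp
  next
    case 3 then show ?thesis using less.IH[of x] x less.prems by simp
  qed
qed

lemma lemC':
  assumes "Hh n E v w" "v < w" "w < r" "\<forall>x. w < x \<and> x < r \<longrightarrow> \<not> Hh n E x v"
  shows "v \<le> y \<Longrightarrow> y < w \<Longrightarrow> Hh n E y r \<Longrightarrow> Hh n E w r"
proof (induction "w - y" arbitrary: y rule: less_induct)
  case (less y)
  have "y + 1 < r" using less.prems assms by linarith
  then obtain x where x: "y < x" "x < r" "Hh n E y x" "Hh n E x r" using Hh_bar[OF P less.prems(3)] by blast
  consider "x < w" | "x = w" | "x > w" by linarith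
  then show ?case
  proof cases
    case 1 then show ?thesis using less.hyps[of x] x less.prems by simp
  next
    case 2 then show ?thesis using x by simp
  next
    case 3
    have "Hh n E v x"
    proof (cases "y = v")
      case True then show ?thesis using x by simp
    next
      case False
      then have "v < y" using less.prems by simp
      then show ?thesis using Hh_X[OF P \<open>v < y\<close> less.prems(2) 3 assms(1) x(3)] by simp
    qed
    then show ?thesis using assms(4) x 3 Hh_sym by blast
  qed
qed

lemma xi_inX:
  assumes "e \<in> E"
  shows "\<exists>a b c d. xiG n E e = {a,b,c,d} \<and> inX n E a b c d"
proof -
  from pers_parts(1)[OF P] assms obtain v w where e: "e = {v,w}" "v < w" "1 \<le> v" "w \<le> n" by blast
  have mm: "Min e = v" "Max e = w" using e by auto
  define L where "L = {i. i < v \<and> {i, w} \<in> hatE n E}"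
  define R where "R = {i. w < i \<and> {i, v} \<in> hatE n E}"
  have fL: "finite L" unfolding L_def by (rule finite_subset[of _ "{..<v}"]) auto
  have fR: "finite R"
  proof (rule finite_subset[of _ "{..n+1}"])
    show "R \<subseteq> {..n+1}" unfolding R_def using Hh_bound[OF P] unfolding Hh_def by fastforce
  qed simp
  have "0 \<in> L" unfolding L_def using Hh_0[OF P, of w] e unfolding Hh_def by simp
  then have lL: "Max L \<in> L" and lmax: "\<And>i. i \<in> L \<Longrightarrow> i \<le> Max L" using fL Max_in[OF fL] Max_ge[OF fL] by blast+
  have "n+1 \<in> R" unfolding R_def using Hh_top[OF P, of v] e Hh_sym unfolding Hh_def by auto
  then have rR: "Min R \<in> R" and rmin: "\<And>i. i \<in> R \<Longrightarrow> Min R \<le> i" using fR Min_in[OF fR] Min_le[OF fR] by blast+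
  define l where "l = Max L"
  define r where "r = Min R"
  have xi: "xiG n E e = {l, v, w, r}"
    unfolding xiG_def ellG_def rG_def mm l_def r_def L_def R_def by simp
  have l1: "l < v" "Hh n E l w" using lL unfolding l_def L_def Hh_def by auto
  have r1: "w < r" "Hh n E v r" using rR unfolding r_def R_def Hh_def by (auto simp: insert_commute)
  have vw: "Hh n E v w" using e Hh_E[OF P] assms by simp
  have gap1: "\<forall>x. l < x \<and> x < v \<longrightarrow> \<not> Hh n E x w"
  proof (intro allI impI)
    fix x assume "l < x \<and> x < v"
    then show "\<not> Hh n E x w"
    proof (intro notI)
      assume a: "l < x \<and> x < v" "Hh n E x w"
      then have "x \<in> L" unfolding L_def Hh_def by simp
      then have "x \<le> l" using lmax unfolding l_def by simp
      then show False using a by simp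
    qed
  qed
  have gap2: "\<forall>x. w < x \<and> x < r \<longrightarrow> \<not> Hh n E x v"
  proof (intro allI impI)
    fix x assume "w < x \<and> x < r"
    then show "\<not> Hh n E x v"
    proof (intro notI)
      assume a: "w < x \<and> x < r" "Hh n E x v"
      then have "x \<in> R" unfolding R_def Hh_def by simp
      then have "r \<le> x" using rmin unfolding r_def by simp
      then show False using a by simp
    qed
  qed
  have lr: "Hh n E l r" using Hh_X[OF P l1(1) e(2) r1(1) l1(2) r1(2)] .
  have lv: "Hh n E l v" using lemC[OF vw l1(1) e(2) gap1, of w] l1 e by simp
  have wr: "Hh n E w r" using lemC'[OF vw e(2) r1(1) gap2, of v] r1 e by simp
  have "inX n E l v w r"
    unfolding inX_def using l1 r1 e vw gap1 gap2 lr lv wr assms Hh_sym by auto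
  then show ?thesis using xi by blast
qed

lemma inX_xi:
  assumes "inX n E a b c d"
  shows "{a,b,c,d} \<in> XiG n E"
proof -
  have X: "a < b" "b < c" "c < d" "{b,c} \<in> E" "Hh n E a c" "Hh n E b d"
    "\<forall>x. a < x \<and> x < b \<longrightarrow> \<not> Hh n E x c" "\<forall>x. c < x \<and> x < d \<longrightarrow> \<not> Hh n E x b"
    using assms unfolding inX_def by auto
  have mm: "Min {b,c} = b" "Max {b,c} = c" using X by auto
  have fL: "finite {i. i < b \<and> {i, c} \<in> hatE n E}" by (rule finite_subset[of _ "{..<b}"]) auto
  have fR: "finite {i. c < i \<and> {i, b} \<in> hatE n E}"
  proof (rule finite_subset[of _ "{..n+1}"])
    show "{i. c < i \<and> {i, b} \<in> hatE n E} \<subseteq> {..n+1}" using Hh_bound[OF P] unfolding Hh_def by fastforce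
  qed simp
  have "ellG n E {b,c} = a"
    unfolding ellG_def mm
  proof (rule Max_eqI[OF fL])
    fix y assume "y \<in> {i. i < b \<and> {i, c} \<in> hatE n E}"
    then show "y \<le> a" using X(7) unfolding Hh_def by (metis (mono_tags, lifting) mem_Collect_eq not_le)
  next
    show "a \<in> {i. i < b \<and> {i, c} \<in> hatE n E}" using X unfolding Hh_def by simp
  qed
  moreover have "rG n E {b,c} = d"
    unfolding rG_def mm
  proof (rule Min_eqI[OF fR])
    fix y assume "y \<in> {i. c < i \<and> {i, b} \<in> hatE n E}"
    then show "d \<le> y" using X(8) unfolding Hh_def by (metis (mono_tags, lifting) mem_Collect_eq not_le)
  next
    show "d \<in> {i. c < i \<and> {i, b} \<in> hatE n E}" using X Hh_sym unfolding Hh_def by auto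
  qed
  ultimately have "xiG n E {b,c} = {a,b,c,d}" unfolding xiG_def mm by simp
  then show ?thesis unfolding XiG_def using X(4) by (metis image_eqI)
qed

lemma XiG_char: "\<sigma> \<in> XiG n E \<longleftrightarrow> (\<exists>a b c d. \<sigma> = {a,b,c,d} \<and> inX n E a b c d)"
  using xi_inX inX_xi unfolding XiG_def by blast

end


context
  fixes n :: nat and E :: "nat set set"
  assumes P: "persistent n E"
begin

lemma inX_clique:
  assumes "inX n E a b c d" "x \<in> {a,b,c,d}" "y \<in> {a,b,c,d}" "x \<noteq> y"
  shows "Hh n E x y"
proof -
  have h: "Hh n E a b" "Hh n E a c" "Hh n E a d" "Hh n E b c" "Hh n E b d" "Hh n E c d"
    using assms(1) Hh_E[OF P] unfolding inX_def by auto
  then show ?thesis using assms(2-4) Hh_sym by auto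
qed

lemma inX_B1:
  assumes X: "inX n E a b c d"
  shows "a < p \<Longrightarrow> p < b \<Longrightarrow> c \<le> q \<Longrightarrow> q < d \<Longrightarrow> \<not> Hh n E p q"
proof (induction "q - p" arbitrary: p q rule: less_induct)
  case (less p q)
  have o: "a < b" "b < c" "c < d" and bc: "Hh n E b c"
    and g1: "\<forall>x. a < x \<and> x < b \<longrightarrow> \<not> Hh n E x c" and g2: "\<forall>x. c < x \<and> x < d \<longrightarrow> \<not> Hh n E x b"
    using X Hh_E[OF P] unfolding inX_def by auto
  show ?case
  proof
    assume pq: "Hh n E p q"
    show False
    proof (cases "q = c")
      case True then show False using g1 less.prems pq by blast
    next
      case False
      then have "p + 1 < q" using less.prems o by linarith
      then obtain x where x: "p < x" "x < q" "Hh n E p x" "Hh n E x q" using Hh_bar[OF P pq] by blast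
      consider "x < b" | "x = b" | "b < x \<and> x < c" | "x = c" | "c < x" by linarith
      then show False
      proof cases
        case 1
        have m: "q - x < q - p" using x by linarith
        show False using less.hyps[of q x] m less.prems x 1 by simp
      next
        case 2 then show False using g2 x less.prems False Hh_sym by (metis le_neq_implies_less)
      next
        case 3
        have "Hh n E p c" by (rule Hh_X[OF P _ _ _ x(3) bc]) (use less.prems 3 in linarith)+
        then show False using g1 less.prems by blast
      next
        case 4 then show False using g1 less.prems x by blast
      next
        case 5
        have m: "x - p < q - p" using x by linarith
        show False using less.hyps[of x p] m less.prems x 5 by simp
      qed
    qed
  qed
qed

lemma inX_B2:
  assumes X: "inX n E a b c d"
  shows "a < p \<Longrightarrow> p \<le> b \<Longrightarrow> c < q \<Longrightarrow> q < d \<Longrightarrow> \<not> Hh n E p q"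
proof (induction "q - p" arbitrary: p q rule: less_induct)
  case (less p q)
  have o: "a < b" "b < c" "c < d" and bc: "Hh n E b c"
    and g1: "\<forall>x. a < x \<and> x < b \<longrightarrow> \<not> Hh n E x c" and g2: "\<forall>x. c < x \<and> x < d \<longrightarrow> \<not> Hh n E x b"
    using X Hh_E[OF P] unfolding inX_def by auto
  show ?case
  proof
    assume pq: "Hh n E p q"
    show False
    proof (cases "p = b")
      case True then show False using g2 less.prems pq Hh_sym by blast
    next
      case False
      then have pb: "p < b" using less.prems by simp
      then have "p + 1 < q" using less.prems o by linarith
      then obtain x where x: "p < x" "x < q" "Hh n E p x" "Hh n E x q" using Hh_bar[OF P pq] by blast
      consider "x < b" | "x = b" | "b < x \<and> x < c" | "x = c" | "c < x" by linarith
      then show False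
      proof cases
        case 1
        have m: "q - x < q - p" using x by linarith
        show False using less.hyps[of q x] m less.prems x 1 by simp
      next
        case 2 then show False using g2 x less.prems Hh_sym by metis
      next
        case 3
        have "Hh n E b q" by (rule Hh_X[OF P _ _ _ bc x(4)]) (use less.prems 3 in linarith)+
        then show False using g2 less.prems Hh_sym by blast
      next
        case 4 then show False using g1 less.prems x pb by blast
      next
        case 5
        have m: "x - p < q - p" using x by linarith
        show False using less.hyps[of x p] m less.prems x 5 by simp
      qed
    qed
  qed
qed

lemma inX_noalt:
  assumes X: "inX n E a b c d" and s: "s1 \<in> {a,b,c,d}" "s2 \<in> {a,b,c,d}" "s3 \<in> {a,b,c,d}"
    and o: "s1 < t1" "t1 < s2" "s2 < t2" "t2 < s3" and h: "Hh n E t1 t2"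
  shows False
proof -
  have oo: "a < b" "b < c" "c < d" and bc: "Hh n E b c"
    and g1: "\<forall>x. a < x \<and> x < b \<longrightarrow> \<not> Hh n E x c" and g2: "\<forall>x. c < x \<and> x < d \<longrightarrow> \<not> Hh n E x b"
    using X Hh_E[OF P] unfolding inX_def by auto
  have cases: "(s1 = a \<and> s2 = b \<and> s3 = c) \<or> (s1 = a \<and> s2 = b \<and> s3 = d) \<or>
     (s1 = a \<and> s2 = c \<and> s3 = d) \<or> (s1 = b \<and> s2 = c \<and> s3 = d)"
  proof -
    have A: "s1 = a \<or> s1 = b \<or> s1 = c \<or> s1 = d" using s(1) by simp
    have B: "s2 = a \<or> s2 = b \<or> s2 = c \<or> s2 = d" using s(2) by simp
    have C: "s3 = a \<or> s3 = b \<or> s3 = c \<or> s3 = d" using s(3) by simp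
    have s12: "s1 < s2" "s2 < s3" using o by linarith+
    show ?thesis using A B C s12 oo by (elim disjE; ((simp; fail)?); linarith)
  qed
  then show False
  proof (elim disjE conjE)
    assume "s1 = a" "s2 = b" "s3 = c"
    then have e: "s1 = a" "s2 = b" "s3 = c" by auto
    have "Hh n E t1 c" by (rule Hh_X[OF P _ _ _ h bc]) (use o e in simp_all)
    then show False using g1 o e by blast
  next
    assume e: "s1 = a" "s2 = b" "s3 = d"
    show False
    proof (cases "t2 < c")
      case True
      have "Hh n E t1 c" by (rule Hh_X[OF P _ _ _ h bc]) (use o e True in simp_all)
      then show False using g1 o e by blast
    next
      case False
      then show False using inX_B1[OF X, of t1 t2] o e h by simp
    qed
  next
    assume e: "s1 = a" "s2 = c" "s3 = d"
    show False
    proof (cases "t1 \<le> b")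
      case True
      then show False using inX_B2[OF X, of t1 t2] o e h by simp
    next
      case False
      have "Hh n E b t2" by (rule Hh_X[OF P _ _ _ bc h]) (use o e False in simp_all)
      then show False using g2 o e Hh_sym by blast
    qed
  next
    assume e: "s1 = b" "s2 = c" "s3 = d"
    have "Hh n E b t2" by (rule Hh_X[OF P _ _ _ bc h]) (use o e in simp_all)
    then show False using g2 o e Hh_sym by blast
  qed
qed

lemma inX_bounds:
  assumes "inX n E a b c d"
  shows "{a,b,c,d} \<subseteq> {0..<n+2}" "card {a,b,c,d} = 4"
proof -
  have "a < b" "b < c" "c < d" "Hh n E c d" using assms unfolding inX_def by auto
  moreover then have "d \<le> n+1" using Hh_bound[OF P] by blast
  ultimately show "{a,b,c,d} \<subseteq> {0..<n+2}" "card {a,b,c,d} = 4" by auto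
qed

lemma lemE:
  "x < p \<Longrightarrow> p < c \<Longrightarrow> c < y \<Longrightarrow> {x,c} \<in> E \<Longrightarrow> {p,y} \<in> E \<Longrightarrow>
    \<exists>z. x < z \<and> z \<le> p \<and> {x,z} \<in> E \<and> {z,y} \<in> E"
proof (induction c rule: less_induct)
  case (less c)
  have "x + 1 < c" using less.prems by linarith
  then obtain w where w: "x < w" "w < c" "{x,w} \<in> E" "{w,c} \<in> E" using p_bar[OF P less.prems(4)] by blast
  consider "w < p" | "w = p" | "p < w" by linarith
  then show ?case
  proof cases
    case 1
    have "{w,y} \<in> E" using p_X[OF P 1 less.prems(2) less.prems(3) w(4) less.prems(5)] .
    then show ?thesis using w 1 by auto
  next
    case 2 then show ?thesis using w less.prems by auto
  next
    case 3 then show ?thesis using less.IH[of w] w less.prems by auto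
  qed
qed

lemma lemE':
  "x < p \<Longrightarrow> p < c \<Longrightarrow> c < y \<Longrightarrow> {x,c} \<in> E \<Longrightarrow> {p,y} \<in> E \<Longrightarrow>
    \<exists>z. c \<le> z \<and> z < y \<and> {x,z} \<in> E \<and> {z,y} \<in> E"
proof (induction "c - p" arbitrary: p rule: less_induct)
  case (less p)
  have "p + 1 < y" using less.prems by linarith
  then obtain w where w: "p < w" "w < y" "{p,w} \<in> E" "{w,y} \<in> E" using p_bar[OF P less.prems(5)] by blast
  consider "w < c" | "w = c" | "c < w" by linarith
  then show ?case
  proof cases
    case 1 then show ?thesis using less.hyps[of w] w less.prems by auto
  next
    case 2 then show ?thesis using w less.prems by auto
  next
    case 3
    have "{x,w} \<in> E" using p_X[OF P less.prems(1) less.prems(2) 3 less.prems(4) w(3)] .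
    then show ?thesis using w 3 by (intro exI[of _ w]) simp
  qed
qed

definition forced :: "nat \<Rightarrow> nat \<Rightarrow> bool" where
  "forced a d \<longleftrightarrow> (\<exists>b c. a < b \<and> b < c \<and> c < d \<and> {a,c} \<in> E \<and> {b,d} \<in> E)"

lemma removable:
  assumes "{a0,b0} \<in> E" "a0 + 1 < b0"
  shows "\<exists>b d. {b,d} \<in> E \<and> b + 1 < d \<and> persistent n (E - {{b,d}})"
proof -
  define Q where "Q = (\<lambda>k. \<exists>a b. {a,b} \<in> E \<and> a + 1 < b \<and> b - a = k)"
  have "Q (b0 - a0)" unfolding Q_def using assms by blast
  then have "\<exists>k. Q k \<and> (\<forall>k'. Q k' \<longrightarrow> k \<le> k')" by (metis LeastI Least_le)
  then obtain a1 b1 where ab1: "{a1,b1} \<in> E" "a1 + 1 < b1"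
     and min1: "\<And>a b. {a,b} \<in> E \<Longrightarrow> a + 1 < b \<Longrightarrow> b1 - a1 \<le> b - a"
    unfolding Q_def by blast
  have unf1: "\<not> forced a1 b1"
  proof
    assume "forced a1 b1"
    then obtain b c where "a1 < b" "b < c" "c < b1" "{a1,c} \<in> E" unfolding forced_def by blast
    then show False using min1[of a1 c] by linarith
  qed
  define Q2 where "Q2 = (\<lambda>k. \<exists>a b. {a,b} \<in> E \<and> a + 1 < b \<and> \<not> forced a b \<and> b - a = k)"
  have "Q2 (b1 - a1)" unfolding Q2_def using ab1 unf1 by blast
  moreover have "\<forall>k. Q2 k \<longrightarrow> k \<le> n"
    unfolding Q2_def using p_edge[OF P] by fastforce
  ultimately obtain k where "Q2 k" and kmax: "\<forall>k'. Q2 k' \<longrightarrow> k' \<le> k"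
    using Nat.ex_has_greatest_nat[of Q2 "b1 - a1" n] by blast
  then obtain b d where bd: "{b,d} \<in> E" "b + 1 < d" "\<not> forced b d" "d - b = k" unfolding Q2_def by blast
  have max2: "\<And>x y. {x,y} \<in> E \<Longrightarrow> x + 1 < y \<Longrightarrow> \<not> forced x y \<Longrightarrow> y - x \<le> d - b"
    using kmax bd(4) unfolding Q2_def by blast
  let ?E' = "E - {{b,d}}"
  have pp: "\<forall>e\<in>?E'. \<exists>a b. e = {a, b} \<and> a < b \<and> 1 \<le> a \<and> b \<le> n"
    using pers_parts(1)[OF P] by blast
  have pa: "\<forall>i. 1 \<le> i \<and> i < n \<longrightarrow> {i, i + 1} \<in> ?E'"
  proof (intro allI impI)
    fix i assume "1 \<le> i \<and> i < n"
    then have "{i, i+1} \<in> E" using p_path[OF P] by blast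
    moreover have "{i, i+1} \<noteq> {b,d}" using bd(2) by (auto simp: doubleton_eq_iff)
    ultimately show "{i, i + 1} \<in> ?E'" by blast
  qed
  have px: "\<forall>a b' c d'. a < b' \<and> b' < c \<and> c < d' \<and> {a, c} \<in> ?E' \<and> {b', d'} \<in> ?E' \<longrightarrow> {a, d'} \<in> ?E'"
  proof (intro allI impI)
    fix a b' c d' assume h: "a < b' \<and> b' < c \<and> c < d' \<and> {a, c} \<in> ?E' \<and> {b', d'} \<in> ?E'"
    then have "{a,d'} \<in> E" using p_X[OF P] by blast
    moreover have "{a,d'} \<noteq> {b,d}"
    proof
      assume "{a,d'} = {b,d}"
      then have "a = b" "d' = d" using h bd(2) by (auto simp: doubleton_eq_iff)
      then show False using bd(3) h unfolding forced_def by blast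
    qed
    ultimately show "{a,d'} \<in> ?E'" by blast
  qed
  have pb: "\<forall>x y. {x, y} \<in> ?E' \<and> x + 1 < y \<longrightarrow> (\<exists>z. x < z \<and> z < y \<and> {x, z} \<in> ?E' \<and> {z, y} \<in> ?E')"
  proof (intro allI impI)
    fix x y assume h: "{x, y} \<in> ?E' \<and> x + 1 < y"
    then obtain z where z: "x < z" "z < y" "{x,z} \<in> E" "{z,y} \<in> E" using p_bar[OF P] by blast
    show "\<exists>z. x < z \<and> z < y \<and> {x, z} \<in> ?E' \<and> {z, y} \<in> ?E'"
    proof (cases "{x,z} = {b,d} \<or> {z,y} = {b,d}")
      case False then show ?thesis using z by blast
    next
      case True
      then have lt: "d - b < y - x" using z bd(2) by (auto simp: doubleton_eq_iff)
      have "forced x y" using max2[of x y] h lt by fastforce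
      then obtain p c where pc: "x < p" "p < c" "c < y" "{x,c} \<in> E" "{p,y} \<in> E" unfolding forced_def by blast
      obtain z1 where z1: "x < z1" "z1 \<le> p" "{x,z1} \<in> E" "{z1,y} \<in> E" using lemE[OF pc] by blast
      obtain z2 where z2: "c \<le> z2" "z2 < y" "{x,z2} \<in> E" "{z2,y} \<in> E" using lemE'[OF pc] by blast
      have "z1 < z2" using z1 z2 pc by linarith
      show ?thesis
      proof (cases "{x,z1} = {b,d} \<or> {z1,y} = {b,d}")
        case False then show ?thesis using z1 pc by (intro exI[of _ z1]) auto
      next
        case True
        then have "{x,z2} \<noteq> {b,d} \<and> {z2,y} \<noteq> {b,d}"
          using \<open>z1 < z2\<close> z1 z2 by (auto simp: doubleton_eq_iff)
        then show ?thesis using z2 pc by (intro exI[of _ z2]) auto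
      qed
    qed
  qed
  have "persistent n ?E'" unfolding persistent_def by (intro conjI pp pa px pb)
  then show ?thesis using bd by blast
qed

end


lemma Hh_minus:
  assumes P: "persistent n E" and bdE: "{b,d} \<in> E"
  shows "Hh n (E - {{b,d}}) x y \<longleftrightarrow> Hh n E x y \<and> {x,y} \<noteq> {b,d}"
proof (cases "{x,y} = {b,d}")
  case True
  have "b \<noteq> d \<and> 1 \<le> b \<and> b \<le> n \<and> 1 \<le> d \<and> d \<le> n" using p_edge[OF P bdE] .
  moreover have "(x = b \<and> y = d) \<or> (x = d \<and> y = b)" using True by (simp add: doubleton_eq_iff)
  ultimately have "\<not> (x \<noteq> y \<and> x \<le> n+1 \<and> y \<le> n+1 \<and> (x = 0 \<or> x = n+1 \<or> y = 0 \<or> y = n+1))" by auto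
  then show ?thesis unfolding Hh_iff using True by simp
next
  case False
  then show ?thesis unfolding Hh_iff by simp
qed

context
  fixes n :: nat and E :: "nat set set" and b d :: nat
  assumes P: "persistent n E" and P': "persistent n (E - {{b,d}})"
    and bdE: "{b,d} \<in> E" and bd: "b < d"
begin

lemma HH': "Hh n (E - {{b,d}}) x y \<longleftrightarrow> Hh n E x y \<and> {x,y} \<noteq> {b,d}"
  using Hh_minus[OF P bdE] .

lemma H'H: "Hh n (E - {{b,d}}) x y \<Longrightarrow> Hh n E x y"
  using HH' by blast

lemma HH'I: "Hh n E x y \<Longrightarrow> \<not> ((x = b \<and> y = d) \<or> (x = d \<and> y = b)) \<Longrightarrow> Hh n (E - {{b,d}}) x y"
  using HH' by (auto simp: doubleton_eq_iff)

lemma not_H'bd: "\<not> Hh n (E - {{b,d}}) b d"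
  using HH' by blast

lemma Hbd: "Hh n E b d" using Hh_E[OF P bdE] .

lemma b1: "1 \<le> b" "d \<le> n" using p_edge[OF P bdE] by auto

lemma flip_case1:
  assumes X': "inX n (E - {{b,d}}) p q d u" and pb: "p < b" and bq: "b < q"
  shows "inX n E p b q d \<and> inX n E b q d u \<and> inX n E p b d u"
proof -
  have o: "p < q" "q < d" "d < u" and qdE: "{q,d} \<in> E" and h': "Hh n (E - {{b,d}}) p q"
    "Hh n (E - {{b,d}}) p d" "Hh n (E - {{b,d}}) p u" "Hh n (E - {{b,d}}) q u" "Hh n (E - {{b,d}}) d u"
    "Hh n (E - {{b,d}}) q d"
    and g1': "\<forall>x. p < x \<and> x < q \<longrightarrow> \<not> Hh n (E - {{b,d}}) x d"
    and g2': "\<forall>x. d < x \<and> x < u \<longrightarrow> \<not> Hh n (E - {{b,d}}) x q"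
    using X' Hh_E[OF P'] unfolding inX_def by auto
  have h: "Hh n E p q" "Hh n E p d" "Hh n E p u" "Hh n E q u" "Hh n E d u" "Hh n E q d"
    using h' H'H by auto
  have "b + 1 < d" using bq o by linarith
  then obtain z where z: "b < z" "z < d" "{b,z} \<in> E" "{z,d} \<in> E" using p_bar[OF P bdE] by blast
  have hz: "Hh n (E - {{b,d}}) b z" "Hh n (E - {{b,d}}) z d"
    using HH'I Hh_E[OF P z(3)] Hh_E[OF P z(4)] z by auto
  have zq: "z = q"
  proof (rule ccontr)
    assume "z \<noteq> q"
    then consider "z < q" | "q < z" by linarith
    then show False
    proof cases
      case 1 then show False using g1' hz pb z by auto
    next
      case 2
      have "Hh n (E - {{b,d}}) b d" by (rule Hh_X[OF P' _ _ _ hz(1) h'(6)]) (use bq 2 z in simp_all)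
      then show False using not_H'bd by simp
    qed
  qed
  have bqE: "{b,q} \<in> E" using z zq by simp
  have Hbq: "Hh n E b q" using Hh_E[OF P bqE] .
  have Hbu: "Hh n E b u" by (rule Hh_X[OF P _ _ _ Hbd h(4)]) (use bq o in simp_all)
  have g1E: "\<forall>x. p < x \<and> x < b \<longrightarrow> \<not> Hh n E x d"
  proof (intro allI impI notI)
    fix x assume x: "p < x \<and> x < b" "Hh n E x d"
    then have "Hh n (E - {{b,d}}) x d" using HH'I bd by auto
    then show False using g1' x bq by auto
  qed
  have Hpb: "Hh n E p b" using lemC[OF P Hbd pb bd g1E, of d] h bd by simp
  have X1: "inX n E p b q d"
    unfolding inX_def
  proof (intro conjI allI impI notI)
    fix x assume x: "p < x \<and> x < b" "Hh n E x q"
    have "Hh n E x d" by (rule Hh_X[OF P _ _ _ x(2) Hbd]) (use x bq o in simp_all)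
    then show False using g1E x by blast
  next
    fix x assume x: "q < x \<and> x < d" "Hh n E x b"
    then have hbx: "Hh n (E - {{b,d}}) b x" using HH'I Hh_sym by auto
    have "Hh n (E - {{b,d}}) b d" by (rule Hh_X[OF P' _ _ _ hbx h'(6)]) (use x bq in simp_all)
    then show False using not_H'bd by simp
  qed (use pb bq o bqE Hpb h Hbd in auto)
  have X2: "inX n E b q d u"
    unfolding inX_def
  proof (intro conjI allI impI notI)
    fix x assume x: "b < x \<and> x < q" "Hh n E x d"
    then have "Hh n (E - {{b,d}}) x d" using HH'I bd by auto
    then show False using g1' x pb by auto
  next
    fix x assume x: "d < x \<and> x < u" "Hh n E x q"
    then have "Hh n (E - {{b,d}}) x q" using HH'I bq o by auto
    then show False using g2' x by auto
  qed (use pb bq o qdE Hbq Hbd Hbu h in auto)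
  have X3: "inX n E p b d u"
    unfolding inX_def
  proof (intro conjI allI impI notI)
    fix x assume x: "p < x \<and> x < b" "Hh n E x d"
    then show False using g1E by blast
  next
    fix x assume x: "d < x \<and> x < u" "Hh n E x b"
    then have "Hh n (E - {{b,d}}) b x" using HH'I Hh_sym by auto
    moreover have "\<not> Hh n (E - {{b,d}}) b x" using inX_B2[OF P' X', of b x] pb bq x by simp
    ultimately show False by simp
  qed (use pb bd o bdE Hpb Hbu h in auto)
  show ?thesis using X1 X2 X3 by simp
qed

lemma flip_case2:
  assumes X': "inX n (E - {{b,d}}) p b s u" and sd: "s < d" and du: "d < u"
  shows "inX n E p b s d \<and> inX n E b s d u \<and> inX n E p b d u"
proof -
  have o: "p < b" "b < s" "s < u" and bsE: "{b,s} \<in> E" and h': "Hh n (E - {{b,d}}) p b"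
    "Hh n (E - {{b,d}}) p s" "Hh n (E - {{b,d}}) p u" "Hh n (E - {{b,d}}) b u" "Hh n (E - {{b,d}}) s u"
    "Hh n (E - {{b,d}}) b s"
    and g1': "\<forall>x. p < x \<and> x < b \<longrightarrow> \<not> Hh n (E - {{b,d}}) x s"
    and g2': "\<forall>x. s < x \<and> x < u \<longrightarrow> \<not> Hh n (E - {{b,d}}) x b"
    using X' Hh_E[OF P'] unfolding inX_def by auto
  have h: "Hh n E p b" "Hh n E p s" "Hh n E p u" "Hh n E b u" "Hh n E s u" "Hh n E b s"
    using h' H'H by auto
  have "b + 1 < d" using o sd by linarith
  then obtain z where z: "b < z" "z < d" "{b,z} \<in> E" "{z,d} \<in> E" using p_bar[OF P bdE] by blast
  have hz: "Hh n (E - {{b,d}}) b z" "Hh n (E - {{b,d}}) z d"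
    using HH'I Hh_E[OF P z(3)] Hh_E[OF P z(4)] z by auto
  have zs: "z = s"
  proof (rule ccontr)
    assume "z \<noteq> s"
    then consider "z < s" | "s < z" by linarith
    then show False
    proof cases
      case 1
      have "Hh n (E - {{b,d}}) b d" by (rule Hh_X[OF P' _ _ _ h'(6) hz(2)]) (use 1 z sd in simp_all)
      then show False using not_H'bd by simp
    next
      case 2 then show False using g2' hz z du Hh_sym by (metis less_trans)
    qed
  qed
  have sdE: "{s,d} \<in> E" using z zs by simp
  have Hsd: "Hh n E s d" using Hh_E[OF P sdE] .
  have Hpd: "Hh n E p d" by (rule Hh_X[OF P _ _ _ h(2) Hbd]) (use o sd in simp_all)
  have g2E: "\<forall>x. d < x \<and> x < u \<longrightarrow> \<not> Hh n E x b"
  proof (intro allI impI notI)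
    fix x assume x: "d < x \<and> x < u" "Hh n E x b"
    then have "Hh n (E - {{b,d}}) x b" using HH'I bd by auto
    then show False using g2' x sd by auto
  qed
  have Hdu: "Hh n E d u" using lemC'[OF P Hbd bd du g2E, of b] h bd by simp
  have X1: "inX n E p b s d"
    unfolding inX_def
  proof (intro conjI allI impI notI)
    fix x assume x: "p < x \<and> x < b" "Hh n E x s"
    then have "Hh n (E - {{b,d}}) x s" using HH'I o sd by auto
    then show False using g1' x by auto
  next
    fix x assume x: "s < x \<and> x < d" "Hh n E x b"
    then have "Hh n (E - {{b,d}}) x b" using HH'I by auto
    then show False using g2' x du by auto
  qed (use o sd bsE h Hpd Hbd Hsd in auto)
  have X2: "inX n E b s d u"
    unfolding inX_def
  proof (intro conjI allI impI notI)
    fix x assume x: "b < x \<and> x < s" "Hh n E x d"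
    then have hxd: "Hh n (E - {{b,d}}) x d" using HH'I bd by auto
    have "Hh n (E - {{b,d}}) b d" by (rule Hh_X[OF P' _ _ _ h'(6) hxd]) (use x sd in simp_all)
    then show False using not_H'bd by simp
  next
    fix x assume x: "d < x \<and> x < u" "Hh n E x s"
    have "Hh n E b x" by (rule Hh_X[OF P _ _ _ Hbd]) (use x o sd Hh_sym in simp_all)
    then have "Hh n E x b" using Hh_sym by simp
    then show False using g2E x by blast
  qed (use o sd du sdE h Hbd Hsd Hdu in auto)
  have X3: "inX n E p b d u"
    unfolding inX_def
  proof (intro conjI allI impI notI)
    fix x assume x: "p < x \<and> x < b" "Hh n E x d"
    then have "Hh n (E - {{b,d}}) x d" using HH'I bd by auto
    moreover have "\<not> Hh n (E - {{b,d}}) x d" using inX_B1[OF P' X', of x d] x sd du by simp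
    ultimately show False by simp
  next
    fix x assume x: "d < x \<and> x < u" "Hh n E x b"
    then show False using g2E by blast
  qed (use o bd du bdE h Hpd Hdu in auto)
  show ?thesis using X1 X2 X3 by simp
qed

lemma flip_comb:
  assumes X': "inX n (E - {{b,d}}) p q s u" and nX: "\<not> inX n E p q s u"
  shows "(p < b \<and> b < q \<and> s = d \<and> inX n E p b q d \<and> inX n E b q d u \<and> inX n E p b d u) \<or>
         (q = b \<and> s < d \<and> d < u \<and> inX n E p b s d \<and> inX n E b s d u \<and> inX n E p b d u)"
proof -
  have o: "p < q" "q < s" "s < u" and qsE: "{q,s} \<in> E - {{b,d}}" and h': "Hh n (E - {{b,d}}) p q"
    "Hh n (E - {{b,d}}) p s" "Hh n (E - {{b,d}}) p u" "Hh n (E - {{b,d}}) q u" "Hh n (E - {{b,d}}) s u"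
    and g1': "\<forall>x. p < x \<and> x < q \<longrightarrow> \<not> Hh n (E - {{b,d}}) x s"
    and g2': "\<forall>x. s < x \<and> x < u \<longrightarrow> \<not> Hh n (E - {{b,d}}) x q"
    using X' unfolding inX_def by auto
  have h: "Hh n E p q" "Hh n E p s" "Hh n E p u" "Hh n E q u" "Hh n E s u"
    using h' H'H by auto
  have "\<not> (\<forall>x. p < x \<and> x < q \<longrightarrow> \<not> Hh n E x s) \<or> \<not> (\<forall>x. s < x \<and> x < u \<longrightarrow> \<not> Hh n E x q)"
    using nX o qsE h unfolding inX_def by auto
  then show ?thesis
  proof
    assume "\<not> (\<forall>x. p < x \<and> x < q \<longrightarrow> \<not> Hh n E x s)"
    then obtain x where x: "p < x" "x < q" "Hh n E x s" by blast
    have "\<not> Hh n (E - {{b,d}}) x s" using g1' x by blast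
    then have "(x = b \<and> s = d) \<or> (x = d \<and> s = b)" using HH'I x by blast
    then have "x = b" "s = d" using x o bd by auto
    then have "p < b \<and> b < q \<and> s = d" using x by simp
    moreover then have "inX n E p b q d \<and> inX n E b q d u \<and> inX n E p b d u"
      using flip_case1[of p q u] X' by simp
    ultimately show ?thesis by blast
  next
    assume "\<not> (\<forall>x. s < x \<and> x < u \<longrightarrow> \<not> Hh n E x q)"
    then obtain x where x: "s < x" "x < u" "Hh n E x q" by blast
    have "\<not> Hh n (E - {{b,d}}) x q" using g2' x by blast
    then have "(x = b \<and> q = d) \<or> (x = d \<and> q = b)" using HH'I x by blast
    then have "x = d" "q = b" using x o bd by auto
    then have "q = b \<and> s < d \<and> d < u" using x by simp
    moreover then have "inX n E p b s d \<and> inX n E b s d u \<and> inX n E p b d u"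
      using flip_case2[of p s u] X' by simp
    ultimately show ?thesis by blast
  qed
qed

end


definition alt :: "nat set \<Rightarrow> (nat \<Rightarrow> real) \<Rightarrow> nat \<Rightarrow> bool" where
  "alt S c m \<longleftrightarrow> (\<exists>f s. (s = 1 \<or> s = -1) \<and> (\<forall>j<m. f j \<in> S \<and> (-1)^j * s * c (f j) > 0) \<and>
      (\<forall>j. Suc j < m \<longrightarrow> f j < f (Suc j)))"

lemma alt_neg:
  assumes "alt S (\<lambda>i. - c i) m" shows "alt S c m"
proof -
  obtain f s where fs: "s = 1 \<or> s = -1" "\<forall>j<m. f j \<in> S \<and> (-1)^j * s * (- c (f j)) > 0"
    "\<forall>j. Suc j < m \<longrightarrow> f j < f (Suc j)"
    using assms unfolding alt_def by blast
  have "-s = 1 \<or> -s = -1" using fs(1) by auto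
  moreover have "\<forall>j<m. f j \<in> S \<and> (-1)^j * (-s) * c (f j) > 0" using fs(2) by simp
  ultimately show ?thesis unfolding alt_def using fs(3) by blast
qed

lemma chain_mono:
  assumes "\<forall>j. Suc j < m \<longrightarrow> (f::nat\<Rightarrow>nat) j < f (Suc j)"
  shows "i \<le> j \<Longrightarrow> j < m \<Longrightarrow> f i \<le> f j"
proof (induction j)
  case 0 then show ?case by simp
next
  case (Suc j)
  show ?case
  proof (cases "i = Suc j")
    case True then show ?thesis by simp
  next
    case False
    then have "f i \<le> f j" using Suc by simp
    also have "f j < f (Suc j)" using assms Suc.prems by simp
    finally show ?thesis by simp
  qed
qed

context
  fixes S :: "nat set" and t :: "nat \<Rightarrow> real"
  assumes fin: "finite S" and mono: "\<forall>i\<in>S. \<forall>j\<in>S. i < j \<longrightarrow> t i < t j"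
begin

lemma first_neg:
  fixes c :: "nat \<Rightarrow> real"
  assumes i0: "i0 \<in> S" "c i0 > 0" "\<forall>i\<in>S. i < i0 \<longrightarrow> c i = 0" and s0: "(\<Sum>i\<in>S. c i) = 0"
  shows "\<exists>j0. j0 \<in> S \<and> c j0 < 0 \<and> i0 < j0 \<and> (\<forall>i\<in>S. i < j0 \<longrightarrow> c i \<ge> 0)"
proof -
  define N where "N = {i\<in>S. c i < 0}"
  have "N \<noteq> {}"
  proof
    assume "N = {}"
    have "\<forall>x\<in>S - {i0}. 0 \<le> c x"
    proof
      fix x assume "x \<in> S - {i0}"
      then have "\<not> c x < 0" using \<open>N = {}\<close> unfolding N_def by blast
      then show "0 \<le> c x" by simp
    qed
    then have "c i0 \<le> (\<Sum>i\<in>S. c i)" using member_le_sum[OF i0(1) _ fin, of c] by blast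
    then show False using s0 i0 by simp
  qed
  moreover have fN: "finite N" unfolding N_def using fin by simp
  ultimately have j0: "Min N \<in> N" "\<forall>i\<in>N. Min N \<le> i" using Min_in Min_le by blast+
  define j0 where "j0 = Min N"
  have a: "j0 \<in> S" "c j0 < 0" using j0 unfolding j0_def N_def by auto
  have b: "\<forall>i\<in>S. i < j0 \<longrightarrow> c i \<ge> 0"
  proof (intro ballI impI)
    fix i assume "i \<in> S" "i < j0"
    then show "c i \<ge> 0" using j0(2) unfolding j0_def N_def by force
  qed
  have "i0 < j0"
  proof (rule ccontr)
    assume "\<not> i0 < j0"
    then have "j0 < i0 \<or> j0 = i0" by auto
    then show False using i0 a by auto
  qed
  then show ?thesis using a b by blast
qed

lemma alt_base:
  assumes i0: "i0 \<in> S" "c i0 > 0" "\<forall>i\<in>S. i < i0 \<longrightarrow> c i = 0" and s0: "(\<Sum>i\<in>S. c i) = 0"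
  shows "alt S c 2"
proof -
  obtain j0 where j0: "j0 \<in> S" "c j0 < 0" "i0 < j0" using first_neg[OF i0 s0] by blast
  define f where "f = (\<lambda>j::nat. if j = 0 then i0 else j0)"
  have "\<forall>j<2. f j \<in> S \<and> (-1)^j * 1 * c (f j) > 0"
  proof (intro allI impI)
    fix j :: nat assume "j < 2"
    then have "j = 0 \<or> j = 1" by auto
    then show "f j \<in> S \<and> (-1)^j * 1 * c (f j) > 0" using i0 j0 unfolding f_def by auto
  qed
  moreover have "\<forall>j. Suc j < 2 \<longrightarrow> f j < f (Suc j)" using j0 unfolding f_def by auto
  ultimately show ?thesis unfolding alt_def by (intro exI[of _ f] exI[of _ 1]) simp
qed

lemma alt_step:
  assumes i0: "i0 \<in> S" "c i0 > 0" "\<forall>i\<in>S. i < i0 \<longrightarrow> c i = 0"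
    and orth: "\<forall>j\<le>Suc k. (\<Sum>i\<in>S. c i * t i ^ j) = 0"
    and IH: "\<And>d. (\<exists>i\<in>S. d i \<noteq> 0) \<Longrightarrow> (\<forall>j\<le>k. (\<Sum>i\<in>S. d i * t i ^ j) = 0) \<Longrightarrow> alt S d (k+2)"
  shows "alt S c (k+3)"
proof -
  have s0: "(\<Sum>i\<in>S. c i) = 0" using orth[rule_format, of 0] by simp
  obtain j0 where j0: "j0 \<in> S" "c j0 < 0" "i0 < j0" "\<forall>i\<in>S. i < j0 \<longrightarrow> c i \<ge> 0"
    using first_neg[OF i0 s0] by blast
  define d where "d = (\<lambda>i. c i * (t i - t j0))"
  have tij: "t i0 < t j0" using mono i0 j0 by blast
  have dnz: "\<exists>i\<in>S. d i \<noteq> 0" using i0 tij unfolding d_def by (intro bexI[of _ i0]) auto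
  have dorth: "\<forall>j\<le>k. (\<Sum>i\<in>S. d i * t i ^ j) = 0"
  proof (intro allI impI)
    fix j assume "j \<le> k"
    have "(\<Sum>i\<in>S. d i * t i ^ j) = (\<Sum>i\<in>S. c i * t i ^ Suc j - t j0 * (c i * t i ^ j))"
      unfolding d_def by (rule sum.cong) (auto simp: algebra_simps)
    also have "\<dots> = (\<Sum>i\<in>S. c i * t i ^ Suc j) - t j0 * (\<Sum>i\<in>S. c i * t i ^ j)"
      by (simp add: sum_subtractf sum_distrib_left)
    also have "\<dots> = 0" using orth[rule_format, of "Suc j"] orth[rule_format, of j] \<open>j \<le> k\<close>
      by (simp del: power_Suc)
    finally show "(\<Sum>i\<in>S. d i * t i ^ j) = 0" .
  qed
  obtain f s where fs: "s = 1 \<or> s = -1" "\<forall>j<k+2. f j \<in> S \<and> (-1)^j * s * d (f j) > 0"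
    "\<forall>j. Suc j < k+2 \<longrightarrow> f j < f (Suc j)"
    using IH[OF dnz dorth] unfolding alt_def by blast
  have dle: "\<And>i. i \<in> S \<Longrightarrow> i < j0 \<Longrightarrow> d i \<le> 0"
  proof -
    fix i assume "i \<in> S" "i < j0"
    then have "c i \<ge> 0" "t i < t j0" using j0 mono by auto
    then show "d i \<le> 0" unfolding d_def by (simp add: mult_nonneg_nonpos)
  qed
  have dj0: "d j0 = 0" unfolding d_def by simp
  have dgt: "\<And>i r. i \<in> S \<Longrightarrow> j0 < i \<Longrightarrow> r * d i > 0 \<Longrightarrow> r * c i > 0"
  proof -
    fix i r assume "i \<in> S" "j0 < i" "r * d i > 0"
    then have "t i - t j0 > 0" "(r * c i) * (t i - t j0) > 0" using j0 mono unfolding d_def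
      by (auto simp: algebra_simps)
    then show "r * c i > 0" by (simp add: zero_less_mult_iff)
  qed
  have f0: "f 0 \<in> S" "s * d (f 0) > 0" using fs(2)[rule_format, of 0] by auto
  have fmono: "\<And>i j. i \<le> j \<Longrightarrow> j < k+2 \<Longrightarrow> f i \<le> f j" using chain_mono[OF fs(3)] by blast
  consider "j0 < f 0" | "f 0 < j0"
    using f0 dj0 by (metis linorder_neqE_nat mult_zero_right order_less_irrefl)
  then show ?thesis
  proof cases
    case 1
    have big: "\<And>j. j < k+2 \<Longrightarrow> j0 < f j" using fmono[of 0] 1 by (meson le0 order_less_le_trans)
    show ?thesis
    proof (cases "s = 1")
      case True
      define g where "g = (\<lambda>j::nat. if j = 0 then j0 else f (j - 1))"
      have "\<forall>j<k+3. g j \<in> S \<and> (-1)^j * (-1) * c (g j) > 0"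
      proof (intro allI impI)
        fix j :: nat assume j: "j < k+3"
        show "g j \<in> S \<and> (-1)^j * (-1) * c (g j) > 0"
        proof (cases j)
          case 0 then show ?thesis using j0 unfolding g_def by simp
        next
          case (Suc j')
          then have "j' < k+2" using j by simp
          then have "f j' \<in> S" "(-1)^j' * d (f j') > 0" "j0 < f j'" using fs(2) True big by auto
          then have "(-1)^j' * c (f j') > 0" using dgt by blast
          then show ?thesis using Suc \<open>f j' \<in> S\<close> unfolding g_def by simp
        qed
      qed
      moreover have "\<forall>j. Suc j < k+3 \<longrightarrow> g j < g (Suc j)"
      proof (intro allI impI)
        fix j assume "Suc j < k+3"
        then show "g j < g (Suc j)" using 1 fs(3) unfolding g_def by (cases j) auto
      qed
      ultimately show ?thesis unfolding alt_def by (intro exI[of _ g] exI[of _ "-1"]) simp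
    next
      case False
      then have sm: "s = -1" using fs(1) by simp
      define g where "g = (\<lambda>j::nat. if j = 0 then i0 else f (j - 1))"
      have "\<forall>j<k+3. g j \<in> S \<and> (-1)^j * 1 * c (g j) > 0"
      proof (intro allI impI)
        fix j :: nat assume j: "j < k+3"
        show "g j \<in> S \<and> (-1)^j * 1 * c (g j) > 0"
        proof (cases j)
          case 0 then show ?thesis using i0 unfolding g_def by simp
        next
          case (Suc j')
          then have "j' < k+2" using j by simp
          then have "f j' \<in> S" "((-1)^j' * (-1)) * d (f j') > 0" "j0 < f j'" using fs(2) sm big by auto
          then have "((-1)^j' * (-1)) * c (f j') > 0" using dgt by blast
          then show ?thesis using Suc \<open>f j' \<in> S\<close> unfolding g_def by simp
        qed
      qed
      moreover have "\<forall>j. Suc j < k+3 \<longrightarrow> g j < g (Suc j)"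
      proof (intro allI impI)
        fix j assume "Suc j < k+3"
        then show "g j < g (Suc j)" using 1 fs(3) j0 unfolding g_def by (cases j) auto
      qed
      ultimately show ?thesis unfolding alt_def by (intro exI[of _ g] exI[of _ 1]) simp
    qed
  next
    case 2
    have "d (f 0) \<le> 0" using dle f0 2 by blast
    then have sm: "s = -1" using fs(1) f0 by (auto simp: mult_le_0_iff)
    have f1: "f 1 \<in> S" "d (f 1) > 0" using fs(2)[rule_format, of 1] sm by auto
    have "j0 < f 1"
    proof (rule ccontr)
      assume "\<not> j0 < f 1"
      then have "f 1 < j0 \<or> f 1 = j0" by auto
      then show False using dle f1 dj0 by force
    qed
    then have big: "\<And>j. 1 \<le> j \<Longrightarrow> j < k+2 \<Longrightarrow> j0 < f j" using fmono[of 1] by (meson order_less_le_trans)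
    define g where "g = (\<lambda>j::nat. if j = 0 then i0 else if j = 1 then j0 else f (j - 1))"
    have "\<forall>j<k+3. g j \<in> S \<and> (-1)^j * 1 * c (g j) > 0"
    proof (intro allI impI)
      fix j :: nat assume j: "j < k+3"
      show "g j \<in> S \<and> (-1)^j * 1 * c (g j) > 0"
      proof (cases "j \<le> 1")
        case True
        then have "j = 0 \<or> j = 1" by auto
        then show ?thesis
        proof
          assume "j = 0" then show ?thesis using i0(1,2) unfolding g_def by simp
        next
          assume j1: "j = 1"
          then have "g j = j0" unfolding g_def by simp
          then show ?thesis using j0(1,2) j1 by simp
        qed
      next
        case False
        then obtain j' where j': "j = Suc j'" "1 \<le> j'" by (intro that[of "j - 1"]) auto
        then have "j' < k+2" using j by simp
        then have "f j' \<in> S" "((-1)^j' * (-1)) * d (f j') > 0" "j0 < f j'" using fs(2) sm big j' by auto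
        then have "((-1)^j' * (-1)) * c (f j') > 0" using dgt by blast
        then show ?thesis using j' \<open>f j' \<in> S\<close> unfolding g_def by simp
      qed
    qed
    moreover have "\<forall>j. Suc j < k+3 \<longrightarrow> g j < g (Suc j)"
    proof (intro allI impI)
      fix j assume j: "Suc j < k+3"
      show "g j < g (Suc j)"
      proof (cases "j \<le> 1")
        case True
        then have "j = 0 \<or> j = 1" by auto
        then show ?thesis using j0(3) \<open>j0 < f 1\<close> unfolding g_def by auto
      next
        case False
        then obtain j' where j': "j = Suc j'" "1 \<le> j'" by (intro that[of "j - 1"]) auto
        then show ?thesis using fs(3) j unfolding g_def by auto
      qed
    qed
    ultimately show ?thesis unfolding alt_def by (intro exI[of _ g] exI[of _ 1]) simp
  qed
qed

lemma alt_exists: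
  "(\<exists>i\<in>S. c i \<noteq> 0) \<Longrightarrow> (\<forall>j\<le>k. (\<Sum>i\<in>S. c i * t i ^ j) = 0) \<Longrightarrow> alt S c (k+2)"
proof (induction k arbitrary: c)
  case 0
  define Z where "Z = {i\<in>S. c i \<noteq> 0}"
  have "Z \<noteq> {}" "finite Z" using 0 fin unfolding Z_def by auto
  then have "Min Z \<in> Z" "\<forall>i\<in>Z. Min Z \<le> i" by auto
  define i0 where "i0 = Min Z"
  have i0: "i0 \<in> S" "c i0 \<noteq> 0" "\<forall>i\<in>S. i < i0 \<longrightarrow> c i = 0"
    using \<open>Min Z \<in> Z\<close> \<open>\<forall>i\<in>Z. Min Z \<le> i\<close> unfolding i0_def Z_def by force+
  have s0: "(\<Sum>i\<in>S. c i) = 0" using 0(2) by simp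
  show ?case
  proof (cases "c i0 > 0")
    case True
    have "alt S c 2" using alt_base[OF i0(1) True i0(3) s0] .
    then show ?thesis by (simp add: numeral_2_eq_2)
  next
    case False
    then have "- c i0 > 0" using i0 by simp
    moreover have "(\<Sum>i\<in>S. - c i) = 0" using s0 by (simp add: sum_negf)
    ultimately have "alt S (\<lambda>i. - c i) 2" using alt_base[OF i0(1), of "\<lambda>i. - c i"] i0(3) by simp
    then have "alt S c 2" using alt_neg by blast
    then show ?thesis by (simp add: numeral_2_eq_2)
  qed
next
  case (Suc k)
  define Z where "Z = {i\<in>S. c i \<noteq> 0}"
  have "Z \<noteq> {}" "finite Z" using Suc fin unfolding Z_def by auto
  then have "Min Z \<in> Z" "\<forall>i\<in>Z. Min Z \<le> i" by auto
  define i0 where "i0 = Min Z"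
  have i0: "i0 \<in> S" "c i0 \<noteq> 0" "\<forall>i\<in>S. i < i0 \<longrightarrow> c i = 0"
    using \<open>Min Z \<in> Z\<close> \<open>\<forall>i\<in>Z. Min Z \<le> i\<close> unfolding i0_def Z_def by force+
  show ?case
  proof (cases "c i0 > 0")
    case True
    have "alt S c (k+3)" using alt_step[OF i0(1) True i0(3) Suc.prems(2) Suc.IH] by simp
    moreover have "Suc k + 2 = k + 3" by simp
    ultimately show ?thesis by metis
  next
    case False
    then have "- c i0 > 0" using i0 by simp
    moreover have "\<forall>j\<le>Suc k. (\<Sum>i\<in>S. - c i * t i ^ j) = 0" using Suc.prems(2) by (simp add: sum_negf)
    ultimately have "alt S (\<lambda>i. - c i) (k+3)"
      using alt_step[OF i0(1), of "\<lambda>i. - c i"] i0(3) Suc.IH by simp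
    then have "alt S c (k+3)" using alt_neg by blast
    moreover have "Suc k + 2 = k + 3" by simp
    ultimately show ?thesis by metis
  qed
qed

end


lemma mom_comp [simp]: "moment x $ 1 = x" "moment x $ 2 = x^2" "moment x $ 3 = x^3"
  by (simp_all add: moment_def)

lemma exchange:
  fixes v :: "nat \<Rightarrow> real^3" and l w :: "nat \<Rightarrow> real"
  assumes fin: "finite S" and l0: "\<forall>i\<in>S. l i \<ge> 0" and wpos: "\<exists>j\<in>S. w j > 0"
    and ws: "(\<Sum>i\<in>S. w i) = 0" and wv: "(\<Sum>i\<in>S. w i *\<^sub>R v i) = 0"
  shows "\<exists>l'. (\<forall>i\<in>S. l' i \<ge> 0) \<and> (\<Sum>i\<in>S. l' i) = (\<Sum>i\<in>S. l i) \<and>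
     (\<Sum>i\<in>S. l' i *\<^sub>R v i) = (\<Sum>i\<in>S. l i *\<^sub>R v i) \<and> (\<exists>j\<in>S. w j > 0 \<and> l' j = 0) \<and>
     (\<forall>i\<in>S. l i = 0 \<and> w i \<ge> 0 \<longrightarrow> l' i = 0)"
proof -
  define R where "R = (\<lambda>j. l j / w j) ` {j\<in>S. w j > 0}"
  have fR: "finite R" "R \<noteq> {}" unfolding R_def using fin wpos by auto
  define th where "th = Min R"
  obtain j where j: "j \<in> S" "w j > 0" "th = l j / w j"
    using Min_in[OF fR] unfolding th_def R_def by auto
  have thle: "\<And>i. i \<in> S \<Longrightarrow> w i > 0 \<Longrightarrow> th \<le> l i / w i"
  proof -
    fix i assume "i \<in> S" "w i > 0"
    then have "l i / w i \<in> R" unfolding R_def by auto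
    then show "th \<le> l i / w i" unfolding th_def using fR(1) by simp
  qed
  have th0: "th \<ge> 0" using j l0 by simp
  define l' where "l' = (\<lambda>i. l i - th * w i)"
  have nn: "\<forall>i\<in>S. l' i \<ge> 0"
  proof
    fix i assume i: "i \<in> S"
    show "l' i \<ge> 0"
    proof (cases "w i > 0")
      case True
      then have "th * w i \<le> l i" using thle[OF i True] by (simp add: pos_le_divide_eq)
      then show ?thesis unfolding l'_def by simp
    next
      case False
      then have "th * w i \<le> 0" using th0 by (simp add: mult_nonneg_nonpos)
      moreover have "l i \<ge> 0" using l0 i by blast
      ultimately show ?thesis unfolding l'_def by simp
    qed
  qed
  have s1: "(\<Sum>i\<in>S. l' i) = (\<Sum>i\<in>S. l i)"
    unfolding l'_def using ws by (simp add: sum_subtractf sum_distrib_left[symmetric])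
  have s2: "(\<Sum>i\<in>S. l' i *\<^sub>R v i) = (\<Sum>i\<in>S. l i *\<^sub>R v i)"
  proof -
    have "(\<Sum>i\<in>S. l' i *\<^sub>R v i) = (\<Sum>i\<in>S. l i *\<^sub>R v i - th *\<^sub>R (w i *\<^sub>R v i))"
      unfolding l'_def by (rule sum.cong) (auto simp: scaleR_left_diff_distrib)
    also have "\<dots> = (\<Sum>i\<in>S. l i *\<^sub>R v i) - th *\<^sub>R (\<Sum>i\<in>S. w i *\<^sub>R v i)"
      by (simp add: sum_subtractf scaleR_sum_right)
    finally show ?thesis using wv by simp
  qed
  have z: "l' j = 0" unfolding l'_def using j by simp
  have supp: "\<forall>i\<in>S. l i = 0 \<and> w i \<ge> 0 \<longrightarrow> l' i = 0"
  proof (intro ballI impI)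
    fix i assume i: "i \<in> S" "l i = 0 \<and> w i \<ge> 0"
    then have "l' i \<le> 0" unfolding l'_def using th0 by simp
    then show "l' i = 0" using nn i by force
  qed
  show ?thesis using nn s1 s2 z j supp by blast
qed

context
  fixes t :: "nat \<Rightarrow> real" and D :: "nat set"
  assumes finD: "finite D" and monoD: "\<forall>i\<in>D. \<forall>j\<in>D. i < j \<longrightarrow> t i < t j"
begin

lemma monoS: "S \<subseteq> D \<Longrightarrow> \<forall>i\<in>S. \<forall>j\<in>S. i < j \<longrightarrow> t i < t j"
  using monoD by blast

lemma injP: "inj_on (\<lambda>i. moment (t i)) D"
proof (rule inj_onI)
  fix i j assume ij: "i \<in> D" "j \<in> D" "moment (t i) = moment (t j)"
  then have "moment (t i) $ 1 = moment (t j) $ 1" by simp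
  then have "t i = t j" by simp
  then show "i = j" using monoD ij by (metis linorder_neqE_nat order_less_irrefl)
qed

lemma mom_orth:
  assumes "(\<Sum>i\<in>S. c i) = 0" "(\<Sum>i\<in>S. c i *\<^sub>R moment (t i)) = 0"
  shows "\<forall>j\<le>3. (\<Sum>i\<in>S. c i * t i ^ j) = 0"
proof (intro allI impI)
  fix j :: nat assume "j \<le> 3"
  then have "j = 0 \<or> j = 1 \<or> j = 2 \<or> j = 3" by auto
  moreover have "(\<Sum>i\<in>S. c i * t i) = 0"
    using arg_cong[OF assms(2), of "\<lambda>v. v $ 1"] by simp
  moreover have "(\<Sum>i\<in>S. c i * t i ^ 2) = 0"
    using arg_cong[OF assms(2), of "\<lambda>v. v $ 2"] by simp
  moreover have "(\<Sum>i\<in>S. c i * t i ^ 3) = 0"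
    using arg_cong[OF assms(2), of "\<lambda>v. v $ 3"] by simp
  ultimately show "(\<Sum>i\<in>S. c i * t i ^ j) = 0" using assms(1) by auto
qed

lemma alt5_card:
  assumes "alt S c 5" "finite S"
  shows "5 \<le> card S"
proof -
  obtain f s where fs: "\<forall>j<5. f j \<in> S" "\<forall>j. Suc j < 5 \<longrightarrow> f j < f (Suc j)"
    using assms(1) unfolding alt_def by blast
  have "f 0 < f 1" "f 1 < f 2" "f 2 < f 3" "f 3 < f 4" using fs(2) by (auto simp: numeral_eq_Suc)
  then have "card {f 0, f 1, f 2, f 3, f 4} = 5" by auto
  moreover have "{f 0, f 1, f 2, f 3, f 4} \<subseteq> S" using fs(1) by auto
  ultimately show ?thesis using card_mono[OF assms(2)] by metis
qed

lemma dep_to_idx: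
  assumes S: "S \<subseteq> D" and dep: "affine_dependent ((\<lambda>i. moment (t i)) ` S)"
  shows "\<exists>c. (\<exists>i\<in>S. c i \<noteq> 0) \<and> (\<forall>j\<le>3. (\<Sum>i\<in>S. c i * t i ^ j) = 0)"
proof -
  have fS: "finite S" using S finD finite_subset by blast
  have inj: "inj_on (\<lambda>i. moment (t i)) S" using injP S inj_on_subset by blast
  obtain U where U: "sum U ((\<lambda>i. moment (t i)) ` S) = 0" "\<exists>v\<in>(\<lambda>i. moment (t i)) ` S. U v \<noteq> 0"
    "(\<Sum>v\<in>(\<lambda>i. moment (t i)) ` S. U v *\<^sub>R v) = 0"
    using dep affine_dependent_explicit_finite[of "(\<lambda>i. moment (t i)) ` S"] fS by auto
  define c where "c = (\<lambda>i. U (moment (t i)))"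
  have "(\<Sum>i\<in>S. c i) = 0" using U(1) sum.reindex[OF inj, of U] unfolding c_def by (simp add: o_def)
  moreover have "(\<Sum>i\<in>S. c i *\<^sub>R moment (t i)) = 0"
    using U(3) sum.reindex[OF inj, of "\<lambda>v. U v *\<^sub>R v"] unfolding c_def by (simp add: o_def)
  ultimately have "\<forall>j\<le>3. (\<Sum>i\<in>S. c i * t i ^ j) = 0" by (rule mom_orth)
  moreover have "\<exists>i\<in>S. c i \<noteq> 0" using U(2) unfolding c_def by auto
  ultimately show ?thesis by blast
qed

lemma indep:
  assumes S: "S \<subseteq> D" and c4: "card S \<le> 4"
  shows "\<not> affine_dependent ((\<lambda>i. moment (t i)) ` S)"
proof
  assume dep: "affine_dependent ((\<lambda>i. moment (t i)) ` S)"
  have fS: "finite S" using S finD finite_subset by blast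
  obtain c where c: "\<exists>i\<in>S. c i \<noteq> 0" "\<forall>j\<le>3. (\<Sum>i\<in>S. c i * t i ^ j) = 0"
    using dep_to_idx[OF S dep] by blast
  have "alt S c (3+2)" using alt_exists[OF fS monoS[OF S] c] .
  then have "5 \<le> card S" using alt5_card fS by simp
  then show False using c4 by simp
qed

lemma circuit:
  assumes "a < b" "b < c" "c < d" "d < e" "{a,b,c,d,e} \<subseteq> D"
  shows "\<exists>w. w a > 0 \<and> w b < 0 \<and> w c > 0 \<and> w d < 0 \<and> w e > 0 \<and>
    (\<Sum>i\<in>{a,b,c,d,e}. w i) = 0 \<and> (\<Sum>i\<in>{a,b,c,d,e}. w i *\<^sub>R moment (t i)) = 0"
proof -
  let ?F = "{a,b,c,d,e}"
  have fF: "finite ?F" by simp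
  have inj: "inj_on (\<lambda>i. moment (t i)) ?F" using inj_on_subset[OF injP assms(5)] .
  have cF: "card ?F = 5" using assms(1-4) by simp
  have "card ((\<lambda>i. moment (t i)) ` ?F) = 5" using card_image[OF inj] cF by simp
  then have dep: "affine_dependent ((\<lambda>i. moment (t i)) ` ?F)"
    by (intro affine_dependent_biggerset) auto
  have fS: "finite ?F" by simp
  obtain U where U: "sum U ((\<lambda>i. moment (t i)) ` ?F) = 0" "\<exists>v\<in>(\<lambda>i. moment (t i)) ` ?F. U v \<noteq> 0"
    "(\<Sum>v\<in>(\<lambda>i. moment (t i)) ` ?F. U v *\<^sub>R v) = 0"
    using dep affine_dependent_explicit_finite[of "(\<lambda>i. moment (t i)) ` ?F"] by auto
  define cc where "cc = (\<lambda>i. U (moment (t i)))"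
  have s0: "(\<Sum>i\<in>?F. cc i) = 0" using U(1) sum.reindex[OF inj, of U] unfolding cc_def by (simp add: o_def)
  have s1: "(\<Sum>i\<in>?F. cc i *\<^sub>R moment (t i)) = 0"
    using U(3) sum.reindex[OF inj, of "\<lambda>v. U v *\<^sub>R v"] unfolding cc_def by (simp add: o_def)
  have orth: "\<forall>j\<le>3. (\<Sum>i\<in>?F. cc i * t i ^ j) = 0" using mom_orth[OF s0 s1] .
  have nz: "\<exists>i\<in>?F. cc i \<noteq> 0" using U(2) unfolding cc_def by auto
  have "alt ?F cc (3+2)" using alt_exists[OF fS monoS[OF assms(5)] nz orth] .
  then obtain f s where fs: "s = 1 \<or> s = -1" "\<forall>j<5. f j \<in> ?F \<and> (-1)^j * s * cc (f j) > 0"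
    "\<forall>j. Suc j < 5 \<longrightarrow> f j < f (Suc j)"
    unfolding alt_def by auto
  have m: "f 0 < f 1" "f 1 < f 2" "f 2 < f 3" "f 3 < f 4" using fs(3) by (auto simp: numeral_eq_Suc)
  have inF: "f 0 \<in> ?F" "f 1 \<in> ?F" "f 2 \<in> ?F" "f 3 \<in> ?F" "f 4 \<in> ?F" using fs(2) by auto
  have g0: "f 0 \<ge> a" using inF(1) assms(1-4) by auto
  have g1: "f 1 \<ge> b" using inF(2) g0 m assms(1-4) by auto
  have g2: "f 2 \<ge> c" using inF(3) g1 m assms(1-4) by auto
  have g3: "f 3 \<ge> d" using inF(4) g2 m assms(1-4) by auto
  have e4: "f 4 = e" using inF(5) g3 m assms(1-4) by auto
  have e3: "f 3 = d" using inF(4) g3 m e4 assms(1-4) by auto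
  have e2: "f 2 = c" using inF(3) g2 m e3 assms(1-4) by auto
  have e1: "f 1 = b" using inF(2) g1 m e2 assms(1-4) by auto
  have e0: "f 0 = a" using inF(1) g0 m e1 assms(1-4) by auto
  have sg: "s * cc a > 0" "s * cc b < 0" "s * cc c > 0" "s * cc d < 0" "s * cc e > 0"
    using fs(2)[rule_format, of 0] fs(2)[rule_format, of 1] fs(2)[rule_format, of 2]
      fs(2)[rule_format, of 3] fs(2)[rule_format, of 4] e0 e1 e2 e3 e4 by auto
  define w where "w = (\<lambda>i. s * cc i)"
  have "(\<Sum>i\<in>?F. w i) = 0" unfolding w_def using s0 by (simp add: sum_distrib_left[symmetric])
  moreover have "(\<Sum>i\<in>?F. w i *\<^sub>R moment (t i)) = 0"
  proof -
    have "(\<Sum>i\<in>?F. w i *\<^sub>R moment (t i)) = s *\<^sub>R (\<Sum>i\<in>?F. cc i *\<^sub>R moment (t i))"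
      unfolding w_def by (simp add: scaleR_sum_right)
    then show ?thesis using s1 by simp
  qed
  ultimately show ?thesis using sg unfolding w_def by (intro exI[of _ "\<lambda>i. s * cc i"]) simp
qed

lemma hull_repr:
  assumes S: "S \<subseteq> D" and x: "x \<in> cyc_hull t S"
  shows "\<exists>l. (\<forall>i\<in>S. l i \<ge> 0) \<and> (\<Sum>i\<in>S. l i) = 1 \<and> (\<Sum>i\<in>S. l i *\<^sub>R moment (t i)) = x"
proof -
  have fS: "finite S" using S finD finite_subset by blast
  have inj: "inj_on (\<lambda>i. moment (t i)) S" using injP S inj_on_subset by blast
  obtain u where u: "\<forall>y\<in>(\<lambda>i. moment (t i)) ` S. 0 \<le> u y" "sum u ((\<lambda>i. moment (t i)) ` S) = 1"
    "(\<Sum>y\<in>(\<lambda>i. moment (t i)) ` S. u y *\<^sub>R y) = x"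
    using x unfolding cyc_hull_def convex_hull_finite[OF finite_imageI[OF fS]] by blast
  define l where "l = (\<lambda>i. u (moment (t i)))"
  have "(\<Sum>i\<in>S. l i) = 1" using u(2) sum.reindex[OF inj, of u] unfolding l_def by (simp add: o_def)
  moreover have "(\<Sum>i\<in>S. l i *\<^sub>R moment (t i)) = x"
    using u(3) sum.reindex[OF inj, of "\<lambda>v. u v *\<^sub>R v"] unfolding l_def by (simp add: o_def)
  moreover have "\<forall>i\<in>S. l i \<ge> 0" using u(1) unfolding l_def by simp
  ultimately show ?thesis by blast
qed

end

lemma hull_intro:
  assumes "finite S" "\<forall>i\<in>S. l i \<ge> 0" "(\<Sum>i\<in>S. l i) = 1"
  shows "(\<Sum>i\<in>S. l i *\<^sub>R moment (t i)) \<in> cyc_hull t S"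
  unfolding cyc_hull_def
proof (rule convex_sum[OF assms(1) convex_convex_hull assms(3)])
  fix i assume "i \<in> S"
  then show "moment (t i) \<in> convex hull (\<lambda>i. moment (t i)) ` S" by (intro hull_inc imageI)
qed (use assms(2) in auto)

lemma supp_hull:
  assumes "finite S" "\<sigma> \<subseteq> S" "\<forall>i\<in>S. l i \<ge> 0" "(\<Sum>i\<in>S. l i) = 1" "\<forall>i\<in>S - \<sigma>. l i = 0"
  shows "(\<Sum>i\<in>S. l i *\<^sub>R moment (t i)) \<in> cyc_hull t \<sigma>"
proof -
  have f: "finite \<sigma>" using assms(1,2) finite_subset by blast
  have "(\<Sum>i\<in>S. l i *\<^sub>R moment (t i)) = (\<Sum>i\<in>\<sigma>. l i *\<^sub>R moment (t i))"
    using assms(5) by (intro sum.mono_neutral_right[OF assms(1,2)]) auto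
  moreover have "(\<Sum>i\<in>\<sigma>. l i) = 1"
    using assms(4,5) sum.mono_neutral_right[OF assms(1,2), of l] by simp
  ultimately show ?thesis using hull_intro[OF f, of l t] assms(2,3) by auto
qed


lemma cyc_hull_mono: "A \<subseteq> B \<Longrightarrow> cyc_hull t A \<subseteq> cyc_hull t B"
  unfolding cyc_hull_def by (intro hull_mono image_mono)

context
  fixes t :: "nat \<Rightarrow> real" and D :: "nat set"
  assumes finD: "finite D" and monoD: "\<forall>i\<in>D. \<forall>j\<in>D. i < j \<longrightarrow> t i < t j"
begin

lemma flip_geom:
  assumes o: "a < b" "b < c" "c < d" "d < e" and F: "{a,b,c,d,e} \<subseteq> D"
  shows "cyc_hull t {a,b,c,d,e} \<subseteq> cyc_hull t {a,b,c,d} \<union> cyc_hull t {b,c,d,e} \<union> cyc_hull t {a,b,d,e}"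
proof
  fix x assume x: "x \<in> cyc_hull t {a,b,c,d,e}"
  let ?F = "{a,b,c,d,e}"
  obtain l where l: "\<forall>i\<in>?F. l i \<ge> 0" "(\<Sum>i\<in>?F. l i) = 1" "(\<Sum>i\<in>?F. l i *\<^sub>R moment (t i)) = x"
    using hull_repr[OF finD monoD F x] by blast
  obtain w where w: "w a > 0" "w b < 0" "w c > 0" "w d < 0" "w e > 0"
    "(\<Sum>i\<in>?F. w i) = 0" "(\<Sum>i\<in>?F. w i *\<^sub>R moment (t i)) = 0"
    using circuit[OF finD monoD o F] by blast
  obtain l' where l': "\<forall>i\<in>?F. l' i \<ge> 0" "(\<Sum>i\<in>?F. l' i) = (\<Sum>i\<in>?F. l i)"
     "(\<Sum>i\<in>?F. l' i *\<^sub>R moment (t i)) = (\<Sum>i\<in>?F. l i *\<^sub>R moment (t i))"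
     "\<exists>j\<in>?F. w j > 0 \<and> l' j = 0"
    using exchange[of ?F l w "\<lambda>i. moment (t i)"] l(1) w by auto
  obtain j where j: "j \<in> ?F" "w j > 0" "l' j = 0" using l'(4) by blast
  have s1: "(\<Sum>i\<in>?F. l' i) = 1" using l'(2) l(2) by simp
  have xe: "x = (\<Sum>i\<in>?F. l' i *\<^sub>R moment (t i))" using l'(3) l(3) by simp
  have "j = a \<or> j = c \<or> j = e" using j w by auto
  then show "x \<in> cyc_hull t {a,b,c,d} \<union> cyc_hull t {b,c,d,e} \<union> cyc_hull t {a,b,d,e}"
  proof (elim disjE)
    assume "j = a"
    then have "x \<in> cyc_hull t {b,c,d,e}" unfolding xe
      by (intro supp_hull) (use l'(1) s1 j o in auto)
    then show ?thesis by blast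
  next
    assume "j = c"
    then have "x \<in> cyc_hull t {a,b,d,e}" unfolding xe
      by (intro supp_hull) (use l'(1) s1 j o in auto)
    then show ?thesis by blast
  next
    assume "j = e"
    then have "x \<in> cyc_hull t {a,b,c,d}" unfolding xe
      by (intro supp_hull) (use l'(1) s1 j o in auto)
    then show ?thesis by blast
  qed
qed

lemma hull_inter:
  assumes S1: "\<sigma> \<subseteq> D" and S2: "\<tau> \<subseteq> D"
    and NA1: "\<And>x1 x2 x3 x4 x5. x1 < x2 \<Longrightarrow> x2 < x3 \<Longrightarrow> x3 < x4 \<Longrightarrow> x4 < x5 \<Longrightarrow>
       x1 \<in> \<sigma> \<Longrightarrow> x3 \<in> \<sigma> \<Longrightarrow> x5 \<in> \<sigma> \<Longrightarrow> x2 \<in> \<tau> \<Longrightarrow> x4 \<in> \<tau> \<Longrightarrow> False"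
    and NA2: "\<And>x1 x2 x3 x4 x5. x1 < x2 \<Longrightarrow> x2 < x3 \<Longrightarrow> x3 < x4 \<Longrightarrow> x4 < x5 \<Longrightarrow>
       x1 \<in> \<tau> \<Longrightarrow> x3 \<in> \<tau> \<Longrightarrow> x5 \<in> \<tau> \<Longrightarrow> x2 \<in> \<sigma> \<Longrightarrow> x4 \<in> \<sigma> \<Longrightarrow> False"
  shows "cyc_hull t \<sigma> \<inter> cyc_hull t \<tau> \<subseteq> cyc_hull t (\<sigma> \<inter> \<tau>)"
proof
  fix x assume x: "x \<in> cyc_hull t \<sigma> \<inter> cyc_hull t \<tau>"
  let ?S = "\<sigma> \<union> \<tau>"
  have SD: "?S \<subseteq> D" using S1 S2 by simp
  have fS: "finite ?S" using SD finD finite_subset by blast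
  obtain l where l: "\<forall>i\<in>\<sigma>. l i \<ge> 0" "(\<Sum>i\<in>\<sigma>. l i) = 1" "(\<Sum>i\<in>\<sigma>. l i *\<^sub>R moment (t i)) = x"
    using hull_repr[OF finD monoD S1] x by blast
  obtain m where m: "\<forall>i\<in>\<tau>. m i \<ge> 0" "(\<Sum>i\<in>\<tau>. m i) = 1" "(\<Sum>i\<in>\<tau>. m i *\<^sub>R moment (t i)) = x"
    using hull_repr[OF finD monoD S2] x by blast
  define l0 where "l0 = (\<lambda>i. if i \<in> \<sigma> then l i else 0)"
  define m0 where "m0 = (\<lambda>i. if i \<in> \<tau> then m i else 0)"
  have l0s: "(\<Sum>i\<in>?S. l0 i) = 1"
  proof -
    have "(\<Sum>i\<in>?S. l0 i) = (\<Sum>i\<in>\<sigma>. l0 i)"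
      by (rule sum.mono_neutral_right[OF fS]) (auto simp: l0_def)
    also have "\<dots> = 1" using l(2) unfolding l0_def by simp
    finally show ?thesis .
  qed
  have l0v: "(\<Sum>i\<in>?S. l0 i *\<^sub>R moment (t i)) = x"
  proof -
    have "(\<Sum>i\<in>?S. l0 i *\<^sub>R moment (t i)) = (\<Sum>i\<in>\<sigma>. l0 i *\<^sub>R moment (t i))"
      by (rule sum.mono_neutral_right[OF fS]) (auto simp: l0_def)
    also have "\<dots> = x" using l(3) unfolding l0_def by simp
    finally show ?thesis .
  qed
  have m0s: "(\<Sum>i\<in>?S. m0 i) = 1"
  proof -
    have "(\<Sum>i\<in>?S. m0 i) = (\<Sum>i\<in>\<tau>. m0 i)"
      by (rule sum.mono_neutral_right[OF fS]) (auto simp: m0_def)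
    also have "\<dots> = 1" using m(2) unfolding m0_def by simp
    finally show ?thesis .
  qed
  have m0v: "(\<Sum>i\<in>?S. m0 i *\<^sub>R moment (t i)) = x"
  proof -
    have "(\<Sum>i\<in>?S. m0 i *\<^sub>R moment (t i)) = (\<Sum>i\<in>\<tau>. m0 i *\<^sub>R moment (t i))"
      by (rule sum.mono_neutral_right[OF fS]) (auto simp: m0_def)
    also have "\<dots> = x" using m(3) unfolding m0_def by simp
    finally show ?thesis .
  qed
  have l0p: "\<forall>i\<in>?S. l0 i \<ge> 0" using l(1) unfolding l0_def by auto
  have m0p: "\<forall>i. m0 i \<ge> 0" using m(1) unfolding m0_def by auto
  have l0p': "\<forall>i. l0 i \<ge> 0" using l(1) unfolding l0_def by auto
  define c where "c = (\<lambda>i. l0 i - m0 i)"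
  have cs: "(\<Sum>i\<in>?S. c i) = 0" unfolding c_def using l0s m0s by (simp add: sum_subtractf)
  have cv: "(\<Sum>i\<in>?S. c i *\<^sub>R moment (t i)) = 0"
    unfolding c_def using l0v m0v by (simp add: sum_subtractf scaleR_left_diff_distrib)
  show "x \<in> cyc_hull t (\<sigma> \<inter> \<tau>)"
  proof (cases "\<forall>i\<in>?S. c i = 0")
    case True
    have "\<forall>i\<in>?S - (\<sigma> \<inter> \<tau>). l0 i = 0"
    proof
      fix i assume i: "i \<in> ?S - (\<sigma> \<inter> \<tau>)"
      then have "l0 i = m0 i" using True unfolding c_def by simp
      then show "l0 i = 0" using i unfolding l0_def m0_def by auto
    qed
    then have "(\<Sum>i\<in>?S. l0 i *\<^sub>R moment (t i)) \<in> cyc_hull t (\<sigma> \<inter> \<tau>)"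
      by (intro supp_hull[OF fS]) (use l0p l0s in auto)
    then show ?thesis using l0v by simp
  next
    case False
    then have nz: "\<exists>i\<in>?S. c i \<noteq> 0" by blast
    have "alt ?S c (3+2)"
      using alt_exists[OF fS monoS[OF finD monoD SD] nz mom_orth[OF finD monoD cs cv]] .
    then obtain f s where fs: "s = 1 \<or> s = -1" "\<forall>j<5. f j \<in> ?S \<and> (-1)^j * s * c (f j) > 0"
      "\<forall>j. Suc j < 5 \<longrightarrow> f j < f (Suc j)"
      unfolding alt_def by auto
    have mm: "f 0 < f 1" "f 1 < f 2" "f 2 < f 3" "f 3 < f 4" using fs(3) by (auto simp: numeral_eq_Suc)
    have pos: "\<And>i. c i > 0 \<Longrightarrow> i \<in> \<sigma>"
    proof (rule ccontr)
      fix i assume "c i > 0" "i \<notin> \<sigma>"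
      then show False using m0p[rule_format, of i] unfolding c_def l0_def by simp
    qed
    have neg: "\<And>i. c i < 0 \<Longrightarrow> i \<in> \<tau>"
    proof (rule ccontr)
      fix i assume "c i < 0" "i \<notin> \<tau>"
      then show False using l0p'[rule_format, of i] unfolding c_def m0_def by simp
    qed
    have sg: "s * c (f 0) > 0" "s * c (f 1) < 0" "s * c (f 2) > 0" "s * c (f 3) < 0" "s * c (f 4) > 0"
      using fs(2)[rule_format, of 0] fs(2)[rule_format, of 1] fs(2)[rule_format, of 2]
        fs(2)[rule_format, of 3] fs(2)[rule_format, of 4] by auto
    from fs(1) show ?thesis
    proof
      assume "s = 1"
      then show ?thesis using NA1[OF mm] sg pos neg by simp
    next
      assume "s = -1"
      then show ?thesis using NA2[OF mm] sg pos neg by simp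
    qed
  qed
qed

lemma hull_face:
  assumes "\<sigma> \<subseteq> D" "card \<sigma> \<le> 4"
  shows "cyc_hull t (\<sigma> \<inter> \<tau>) face_of cyc_hull t \<sigma>"
  unfolding cyc_hull_def face_of_convex_hull_affine_independent[OF indep[OF finD monoD assms]]
  by (intro exI[of _ "(\<lambda>i. moment (t i)) ` (\<sigma> \<inter> \<tau>)"]) auto

end

context
  fixes n :: nat and t :: "nat \<Rightarrow> real"
  assumes n2: "n \<ge> 2" and monoD: "\<forall>i\<in>{0..<n+2}. \<forall>j\<in>{0..<n+2}. i < j \<longrightarrow> t i < t j"
begin

lemma fan_claim:
  fixes l :: "nat \<Rightarrow> real"
  shows "hi - lo = m \<Longrightarrow> 1 \<le> lo \<Longrightarrow> lo \<le> hi \<Longrightarrow> hi \<le> n \<Longrightarrow> (\<forall>i\<in>{0..<n+2}. l i \<ge> 0) \<Longrightarrow>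
     (\<Sum>i\<in>{0..<n+2}. l i) = 1 \<Longrightarrow> (\<forall>j\<in>{0..<n+2}. l j \<noteq> 0 \<longrightarrow> j = 0 \<or> j = n+1 \<or> (lo \<le> j \<and> j \<le> hi)) \<Longrightarrow>
     (\<Sum>i\<in>{0..<n+2}. l i *\<^sub>R moment (t i)) \<in> (\<Union>i\<in>{1..n-1}. cyc_hull t {0,i,i+1,n+1})"
proof (induction m arbitrary: l lo hi rule: less_induct)
  case (less m l lo hi)
  let ?D = "{0..<n+2}"
  let ?U = "(\<Union>i\<in>{1..n-1}. cyc_hull t {0,i,i+1,n+1})"
  have finD: "finite ?D" by simp
  have m: "hi - lo = m" and lo1: "1 \<le> lo" and lohi: "lo \<le> hi" and hin: "hi \<le> n"
    and l0: "\<forall>i\<in>?D. l i \<ge> 0" and ls: "(\<Sum>i\<in>?D. l i) = 1"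
    and supp: "\<forall>j\<in>?D. l j \<noteq> 0 \<longrightarrow> j = 0 \<or> j = n+1 \<or> (lo \<le> j \<and> j \<le> hi)"
    using less.prems by auto
  show "(\<Sum>i\<in>?D. l i *\<^sub>R moment (t i)) \<in> ?U"
  proof (cases "hi \<le> lo + 1")
    case True
    define i where "i = (if lo \<le> n - 1 then lo else n - 1)"
    have i1: "i \<in> {1..n-1}" unfolding i_def using lo1 n2 by auto
    have "(\<Sum>j\<in>?D. l j *\<^sub>R moment (t j)) \<in> cyc_hull t {0,i,i+1,n+1}"
    proof (rule supp_hull[OF finD])
      show "{0,i,i+1,n+1} \<subseteq> ?D" using i1 by auto
      show "\<forall>j\<in>?D - {0,i,i+1,n+1}. l j = 0"
      proof
        fix j assume j: "j \<in> ?D - {0,i,i+1,n+1}"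
        show "l j = 0"
        proof (rule ccontr)
          assume "l j \<noteq> 0"
          then have "j = 0 \<or> j = n+1 \<or> (lo \<le> j \<and> j \<le> hi)" using supp j by blast
          then show False using j True hin lohi unfolding i_def by (auto split: if_splits)
        qed
      qed
    qed (use l0 ls in auto)
    then show ?thesis using i1 by blast
  next
    case False
    have recur: "\<And>l' :: nat \<Rightarrow> real. (\<forall>i\<in>?D. l' i \<ge> 0) \<Longrightarrow> (\<Sum>i\<in>?D. l' i) = 1 \<Longrightarrow>
       (\<forall>j\<in>?D. l' j \<noteq> 0 \<longrightarrow> j = 0 \<or> j = n+1 \<or> (lo \<le> j \<and> j \<le> hi)) \<Longrightarrow> (l' lo = 0 \<or> l' hi = 0) \<Longrightarrow>
       (\<Sum>i\<in>?D. l' i *\<^sub>R moment (t i)) \<in> ?U"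
    proof -
      fix l' :: "nat \<Rightarrow> real" assume a: "\<forall>i\<in>?D. l' i \<ge> 0" "(\<Sum>i\<in>?D. l' i) = 1"
        "\<forall>j\<in>?D. l' j \<noteq> 0 \<longrightarrow> j = 0 \<or> j = n+1 \<or> (lo \<le> j \<and> j \<le> hi)" "l' lo = 0 \<or> l' hi = 0"
      from a(4) show "(\<Sum>i\<in>?D. l' i *\<^sub>R moment (t i)) \<in> ?U"
      proof
        assume z: "l' lo = 0"
        have s: "\<forall>j\<in>?D. l' j \<noteq> 0 \<longrightarrow> j = 0 \<or> j = n+1 \<or> (lo+1 \<le> j \<and> j \<le> hi)"
        proof (intro ballI impI)
          fix j assume "j \<in> ?D" "l' j \<noteq> 0"
          then show "j = 0 \<or> j = n+1 \<or> (lo+1 \<le> j \<and> j \<le> hi)" using a(3) z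
            by (metis Suc_eq_plus1 Suc_leI le_neq_implies_less)
        qed
        show ?thesis
          by (rule less.IH[where y="hi - (lo+1)" and l=l' and lo="lo+1" and hi=hi]) (use m False lo1 hin a(1,2) s in auto)
      next
        assume z: "l' hi = 0"
        have s: "\<forall>j\<in>?D. l' j \<noteq> 0 \<longrightarrow> j = 0 \<or> j = n+1 \<or> (lo \<le> j \<and> j \<le> hi - 1)"
        proof (intro ballI impI)
          fix j assume "j \<in> ?D" "l' j \<noteq> 0"
          then show "j = 0 \<or> j = n+1 \<or> (lo \<le> j \<and> j \<le> hi - 1)" using a(3) z
            by (metis diff_Suc_1 le_neq_implies_less less_Suc_eq_le not0_implies_Suc not_less0)
        qed
        show ?thesis
          by (rule less.IH[where y="hi - 1 - lo" and l=l' and lo=lo and hi="hi - 1"]) (use m False lo1 hin a(1,2) s in auto)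
      qed
    qed
    show ?thesis
    proof (cases "l lo = 0 \<or> l hi = 0")
      case True then show ?thesis using recur l0 ls supp by blast
    next
      case nz: False
      let ?F = "{0, lo, lo+1, hi, n+1}"
      have FD: "?F \<subseteq> ?D" using hin lohi by auto
      obtain w where w: "w 0 > 0" "w lo < 0" "w (lo+1) > 0" "w hi < 0" "w (n+1) > 0"
        "(\<Sum>i\<in>?F. w i) = 0" "(\<Sum>i\<in>?F. w i *\<^sub>R moment (t i)) = 0"
        using circuit[OF finD monoD _ _ _ _ FD] lo1 False hin by auto
      define w' where "w' = (\<lambda>i. if i \<in> ?F then - w i else 0)"
      have ws: "(\<Sum>i\<in>?D. w' i) = 0"
      proof -
        have "(\<Sum>i\<in>?D. w' i) = (\<Sum>i\<in>?F. w' i)"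
          by (rule sum.mono_neutral_right[OF finD FD]) (auto simp: w'_def)
        also have "\<dots> = - (\<Sum>i\<in>?F. w i)" unfolding w'_def by (simp add: sum_negf)
        finally show ?thesis using w(6) by simp
      qed
      have wv: "(\<Sum>i\<in>?D. w' i *\<^sub>R moment (t i)) = 0"
      proof -
        have "(\<Sum>i\<in>?D. w' i *\<^sub>R moment (t i)) = (\<Sum>i\<in>?F. w' i *\<^sub>R moment (t i))"
          by (rule sum.mono_neutral_right[OF finD FD]) (auto simp: w'_def)
        also have "\<dots> = - (\<Sum>i\<in>?F. w i *\<^sub>R moment (t i))" unfolding w'_def by (simp add: sum_negf)
        finally show ?thesis using w(7) by simp
      qed
      have wpos: "\<exists>j\<in>?D. w' j > 0" using w(2) FD unfolding w'_def by (intro bexI[of _ lo]) auto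
      obtain l' where l': "\<forall>i\<in>?D. l' i \<ge> 0" "(\<Sum>i\<in>?D. l' i) = (\<Sum>i\<in>?D. l i)"
        "(\<Sum>i\<in>?D. l' i *\<^sub>R moment (t i)) = (\<Sum>i\<in>?D. l i *\<^sub>R moment (t i))"
        "\<exists>j\<in>?D. w' j > 0 \<and> l' j = 0" "\<forall>i\<in>?D. l i = 0 \<and> w' i \<ge> 0 \<longrightarrow> l' i = 0"
        using exchange[OF finD l0 wpos ws wv] by blast
      obtain j where j: "j \<in> ?D" "w' j > 0" "l' j = 0" using l'(4) by blast
      have "j \<in> ?F" "w j < 0" using j unfolding w'_def by (auto split: if_splits)
      then have jj: "j = lo \<or> j = hi" using w by auto
      have s: "\<forall>k\<in>?D. l' k \<noteq> 0 \<longrightarrow> k = 0 \<or> k = n+1 \<or> (lo \<le> k \<and> k \<le> hi)"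
      proof (intro ballI impI)
        fix k assume k: "k \<in> ?D" "l' k \<noteq> 0"
        then have "l k \<noteq> 0 \<or> w' k < 0" using l'(5) by force
        then show "k = 0 \<or> k = n+1 \<or> (lo \<le> k \<and> k \<le> hi)"
        proof
          assume "l k \<noteq> 0" then show ?thesis using supp k by blast
        next
          assume "w' k < 0"
          then have "k \<in> ?F" "w k > 0" unfolding w'_def by (auto split: if_splits)
          then show ?thesis using w False by auto
        qed
      qed
      have "(\<Sum>i\<in>?D. l' i *\<^sub>R moment (t i)) \<in> ?U"
        using recur[OF l'(1) _ s] l'(2) ls j jj by auto
      then show ?thesis using l'(3) by simp
    qed
  qed
qed

lemma fan:
  "cyc_hull t {0..<n+2} \<subseteq> (\<Union>i\<in>{1..n-1}. cyc_hull t {0,i,i+1,n+1})"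
proof
  let ?D = "{0..<n+2}"
  let ?U = "(\<Union>i\<in>{1..n-1}. cyc_hull t {0,i,i+1,n+1})"
  have finD: "finite ?D" by simp
  fix x assume x: "x \<in> cyc_hull t ?D"
  obtain l where l: "\<forall>i\<in>?D. l i \<ge> 0" "(\<Sum>i\<in>?D. l i) = 1" "(\<Sum>i\<in>?D. l i *\<^sub>R moment (t i)) = x"
    using hull_repr[OF finD monoD _ x] by blast
  have "(\<Sum>i\<in>?D. l i *\<^sub>R moment (t i)) \<in> ?U"
    by (rule fan_claim[of n 1 "n - 1"]) (use n2 l in auto)
  then show "x \<in> ?U" using l(3) by simp
qed

end


lemma covering:
  assumes n2: "n \<ge> 2" and monoD: "\<forall>i\<in>{0..<n+2}. \<forall>j\<in>{0..<n+2}. i < j \<longrightarrow> t i < t j"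
  shows "persistent n E \<Longrightarrow> cyc_hull t {0..<n+2} \<subseteq> \<Union>((\<lambda>\<sigma>. cyc_hull t \<sigma>) ` XiG n E)"
proof (induction "card E" arbitrary: E rule: less_induct)
  case less
  note P = less.prems
  have finD: "finite {0..<n+2}" by simp
  show ?case
  proof (cases "\<exists>a b. {a,b} \<in> E \<and> a + 1 < b")
    case True
    then obtain a0 b0 where "{a0,b0} \<in> E" "a0 + 1 < b0" by blast
    then obtain b d where bd: "{b,d} \<in> E" "b + 1 < d" and P': "persistent n (E - {{b,d}})"
      using removable[OF P] by blast
    have "card (E - {{b,d}}) < card E" using card_Diff1_less[OF p_finite[OF P] bd(1)] .
    then have IH: "cyc_hull t {0..<n+2} \<subseteq> \<Union>((\<lambda>\<sigma>. cyc_hull t \<sigma>) ` XiG n (E - {{b,d}}))"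
      using less.hyps P' by blast
    have bdlt: "b < d" using bd by simp
    show ?thesis
    proof
      fix x assume xD: "x \<in> cyc_hull t {0..<n+2}"
      have "x \<in> \<Union>((\<lambda>\<sigma>. cyc_hull t \<sigma>) ` XiG n (E - {{b,d}}))" using IH xD by (rule subsetD)
      then obtain \<sigma> where \<sigma>: "\<sigma> \<in> XiG n (E - {{b,d}})" "x \<in> cyc_hull t \<sigma>" by (rule UN_E)
      obtain p q s u where pqsu: "\<sigma> = {p,q,s,u}" "inX n (E - {{b,d}}) p q s u"
        using iffD1[OF XiG_char[OF P'] \<sigma>(1)] by (elim exE conjE)
      have sD: "{p,q,s,u} \<subseteq> {0..<n+2}" using inX_bounds[OF P' pqsu(2)] by simp
      show "x \<in> \<Union>((\<lambda>\<sigma>. cyc_hull t \<sigma>) ` XiG n E)"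
      proof (cases "inX n E p q s u")
        case True
        then have "\<sigma> \<in> XiG n E" using inX_xi[OF P] pqsu by simp
        then show ?thesis using \<sigma> by blast
      next
        case False
        from flip_comb[OF P P' bd(1) bdlt pqsu(2) False] show ?thesis
        proof (elim disjE conjE)
          assume h: "p < b" "b < q" "s = d" "inX n E p b q d" "inX n E b q d u" "inX n E p b d u"
          have o: "p < q" "q < s" "s < u" using pqsu(2) unfolding inX_def by auto
          have FD: "{p,b,q,d,u} \<subseteq> {0..<n+2}" using sD h by auto
          have "x \<in> cyc_hull t {p,b,q,d,u}"
            using \<sigma>(2) cyc_hull_mono[of \<sigma> "{p,b,q,d,u}" t] pqsu(1) h by auto
          then have "x \<in> cyc_hull t {p,b,q,d} \<union> cyc_hull t {b,q,d,u} \<union> cyc_hull t {p,b,d,u}"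
            using flip_geom[OF finD monoD h(1) h(2) _ _ FD] o h by auto
          moreover have "{p,b,q,d} \<in> XiG n E" "{b,q,d,u} \<in> XiG n E" "{p,b,d,u} \<in> XiG n E"
            using inX_xi[OF P] h by auto
          ultimately show ?thesis by blast
        next
          assume h: "q = b" "s < d" "d < u" "inX n E p b s d" "inX n E b s d u" "inX n E p b d u"
          have o: "p < q" "q < s" "s < u" using pqsu(2) unfolding inX_def by auto
          have FD: "{p,b,s,d,u} \<subseteq> {0..<n+2}" using sD h by auto
          have "x \<in> cyc_hull t {p,b,s,d,u}"
            using \<sigma>(2) cyc_hull_mono[of \<sigma> "{p,b,s,d,u}" t] pqsu(1) h by auto
          then have "x \<in> cyc_hull t {p,b,s,d} \<union> cyc_hull t {b,s,d,u} \<union> cyc_hull t {p,b,d,u}"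
            using flip_geom[OF finD monoD _ _ h(2) h(3) FD] o h by auto
          moreover have "{p,b,s,d} \<in> XiG n E" "{b,s,d,u} \<in> XiG n E" "{p,b,d,u} \<in> XiG n E"
            using inX_xi[OF P] h by auto
          ultimately show ?thesis by blast
        qed
      qed
    qed
  next
    case False
    have mem: "\<And>i. i \<in> {1..n-1} \<Longrightarrow> {0,i,i+1,n+1} \<in> XiG n E"
    proof -
      fix i assume i: "i \<in> {1..n-1}"
      have "inX n E 0 i (i+1) (n+1)"
        unfolding inX_def
      proof (intro conjI allI impI notI)
        fix x assume x: "0 < x \<and> x < i" "Hh n E x (i+1)"
        then have "{x,i+1} \<in> E" using Hh_inner[OF P x(2)] i by auto
        then show False using False x by auto
      next
        fix x assume x: "i + 1 < x \<and> x < n+1" "Hh n E x i"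
        then have "{i,x} \<in> E" using Hh_inner[OF P x(2)] i by (auto simp: insert_commute)
        then show False using False x by auto
      qed (use i p_path[OF P, of i] Hh_0[OF P] Hh_top[OF P] in auto)
      then show "{0,i,i+1,n+1} \<in> XiG n E" using inX_xi[OF P] by simp
    qed
    show ?thesis
    proof
      fix x assume "x \<in> cyc_hull t {0..<n+2}"
      then obtain i where "i \<in> {1..n-1}" "x \<in> cyc_hull t {0,i,i+1,n+1}" using fan[OF n2 monoD] by blast
      then show "x \<in> \<Union>((\<lambda>\<sigma>. cyc_hull t \<sigma>) ` XiG n E)" using mem by blast
    qed
  qed
qed

theorem lemma12:
  fixes n :: nat and E :: "nat set set" and t :: "nat \<Rightarrow> real"
  assumes "n \<ge> 2"
    and "persistent n E"
    and "strict_mono_on {0..n+1} t"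
  shows "cyc_triangulation t (n + 2) (XiG n E)"
proof -
  note P = assms(2)
  have Deq: "{0..n+1} = {0..<n+2}" by auto
  have monoD: "\<forall>i\<in>{0..<n+2}. \<forall>j\<in>{0..<n+2}. i < j \<longrightarrow> t i < t j"
    using assms(3) unfolding Deq strict_mono_on_def by blast
  have finD: "finite {0..<n+2}" by simp
  have part1: "\<forall>\<sigma>\<in>XiG n E. \<sigma> \<subseteq> {0..<n+2} \<and> card \<sigma> = 4"
  proof
    fix \<sigma> assume sx: "\<sigma> \<in> XiG n E"
    obtain a b c d where "\<sigma> = {a,b,c,d}" "inX n E a b c d"
      using iffD1[OF XiG_char[OF P] sx] by (elim exE conjE)
    then show "\<sigma> \<subseteq> {0..<n+2} \<and> card \<sigma> = 4" using inX_bounds[OF P] by simp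
  qed
  have part2: "\<Union>((\<lambda>\<sigma>. cyc_hull t \<sigma>) ` XiG n E) = cyc_hull t {0..<n+2}"
  proof
    show "\<Union>((\<lambda>\<sigma>. cyc_hull t \<sigma>) ` XiG n E) \<subseteq> cyc_hull t {0..<n+2}"
      using part1 cyc_hull_mono by blast
    show "cyc_hull t {0..<n+2} \<subseteq> \<Union>((\<lambda>\<sigma>. cyc_hull t \<sigma>) ` XiG n E)"
      using covering[OF assms(1) monoD P] .
  qed
  have part3: "\<forall>\<sigma>\<in>XiG n E. \<forall>\<tau>\<in>XiG n E.
        (cyc_hull t \<sigma> \<inter> cyc_hull t \<tau>) face_of cyc_hull t \<sigma> \<and>
        (cyc_hull t \<sigma> \<inter> cyc_hull t \<tau>) face_of cyc_hull t \<tau>"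
  proof (intro ballI)
    fix \<sigma> \<tau> assume s: "\<sigma> \<in> XiG n E" and tt: "\<tau> \<in> XiG n E"
    obtain a b c d where sig: "\<sigma> = {a,b,c,d}" "inX n E a b c d" using iffD1[OF XiG_char[OF P] s] by (elim exE conjE)
    obtain a' b' c' d' where tau: "\<tau> = {a',b',c',d'}" "inX n E a' b' c' d'" using iffD1[OF XiG_char[OF P] tt] by (elim exE conjE)
    have NA: "\<And>A B x1 x2 x3 x4 x5. A \<in> XiG n E \<Longrightarrow> B \<in> XiG n E \<Longrightarrow> x1 < x2 \<Longrightarrow> x2 < x3 \<Longrightarrow> x3 < x4 \<Longrightarrow> x4 < x5 \<Longrightarrow>
       x1 \<in> A \<Longrightarrow> x3 \<in> A \<Longrightarrow> x5 \<in> A \<Longrightarrow> x2 \<in> B \<Longrightarrow> x4 \<in> B \<Longrightarrow> False"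
    proof -
      fix A B x1 x2 x3 x4 x5
      assume A: "A \<in> XiG n E" and B: "B \<in> XiG n E" and o: "x1 < x2" "x2 < x3" "x3 < x4" "x4 < x5"
        and m: "x1 \<in> A" "x3 \<in> A" "x5 \<in> A" "x2 \<in> B" "x4 \<in> B"
      obtain a b c d where A': "A = {a,b,c,d}" "inX n E a b c d" using iffD1[OF XiG_char[OF P] A] by (elim exE conjE)
      obtain a' b' c' d' where B': "B = {a',b',c',d'}" "inX n E a' b' c' d'" using iffD1[OF XiG_char[OF P] B] by (elim exE conjE)
      have "Hh n E x2 x4" using inX_clique[OF P B'(2)] m(4,5) o B'(1) by simp
      then show False using inX_noalt[OF P A'(2), of x1 x3 x5 x2 x4] m A'(1) o by simp
    qed
    have sD: "\<sigma> \<subseteq> {0..<n+2}" "card \<sigma> \<le> 4" using part1 s by auto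
    have tD: "\<tau> \<subseteq> {0..<n+2}" "card \<tau> \<le> 4" using part1 tt by auto
    have eq: "cyc_hull t \<sigma> \<inter> cyc_hull t \<tau> = cyc_hull t (\<sigma> \<inter> \<tau>)"
    proof
      show "cyc_hull t \<sigma> \<inter> cyc_hull t \<tau> \<subseteq> cyc_hull t (\<sigma> \<inter> \<tau>)"
        by (rule hull_inter[OF finD monoD sD(1) tD(1)]) (use NA s tt in blast)+
      show "cyc_hull t (\<sigma> \<inter> \<tau>) \<subseteq> cyc_hull t \<sigma> \<inter> cyc_hull t \<tau>"
        using cyc_hull_mono[of "\<sigma> \<inter> \<tau>" \<sigma> t] cyc_hull_mono[of "\<sigma> \<inter> \<tau>" \<tau> t] by auto
    qed
    have "cyc_hull t (\<sigma> \<inter> \<tau>) face_of cyc_hull t \<sigma>" using hull_face[OF finD monoD sD] .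
    moreover have "cyc_hull t (\<tau> \<inter> \<sigma>) face_of cyc_hull t \<tau>" using hull_face[OF finD monoD tD] .
    ultimately show "(cyc_hull t \<sigma> \<inter> cyc_hull t \<tau>) face_of cyc_hull t \<sigma> \<and>
        (cyc_hull t \<sigma> \<inter> cyc_hull t \<tau>) face_of cyc_hull t \<tau>"
      using eq by (simp add: Int_commute)
  qed
  show ?thesis unfolding cyc_triangulation_def using part1 part2 part3 by blast
qed

end
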